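(* In the Coxeter arrangement of type $B_n$ ($n\ge1$): for $0\le i<j\le n$ the hyperplane $H_{i,j}$ has exactly $2^{j-i-1}$ shards; for $1\le i<j\le n$ the hyperplane $H_{i,-j}$ has exactly $2^{j-i}3^{i-1}$ shards. Consequently the arrangement has $\sum_{0\le i<j\le n}2^{j-i-1}+\sum_{1\le i<j\le n}2^{j-i}3^{i-1}=3^n-n-1$ shards in total.
   Context: Shards. Let $V$ be a real Euclidean space with inner product $\langle\cdot,\cdot\rangle$, $\Phi\subset V$ a finite root system with a chosen set of positive roots $\Phi^+$, and $\mathcal A=\{H_\beta:\beta\in\Phi^+\}$ with $H_\beta=\{\lambda\in V:\langle\lambda,\beta\rangle=0\}$ (the Coxeter arrangement). The base region is $B=\{\lambda\in V:\langle\lambda,\beta\rangle>0\text{ for all }\beta\in\Phi^+\}$. For distinct $H,H'\in\mathcal A$ let $\mathcal A(H,H')$ be the set of hyperplanes of $\mathcal A$ containing $H\cap H'$ (a rank two subarrangement). Exactly one connected component $B'$ of $V\setminus\bigcup\mathcal A(H,H')$ contains $B$, and exactly two hyperplanes of $\mathcal A(H,H')$ contain facets of the closure of $B'$; these are the basic hyperplanes of $\mathcal A(H,H')$. Each non-basic $H''\in\mathcal A(H,H')$ is said to be cut by each of the two basic hyperplanes of $\mathcal A(H,H')$. For $H\in\mathcal A$ let $L_H$ be the set of hyperplanes of $\mathcal A$ that cut $H$ in some rank two subarrangement; the shards of $H$ are the closures of the connected components of $H\setminus\bigcup_{H_\gamma\in L_H}(H\cap H_\gamma)$. A shard of $\mathcal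 A$ is a shard of some $H\in\mathcal A$. Type $B_n$: $V=\mathbb R^n$ with the standard inner product, $\Phi^+=\{\varepsilon_j\pm\varepsilon_i:1\le i<j\le n\}\cup\{\varepsilon_i:1\le i\le n\}$, base region $B=\{0<x_1<\cdots<x_n\}$. The hyperplanes are $H_{i,j}=\{x_i=x_j\}$ ($1\le i<j\le n$, root $\varepsilon_j-\varepsilon_i$), $H_{0,j}=\{x_j=0\}$ ($1\le j\le n$, root $\varepsilon_j$), and $H_{i,-j}=\{x_i=-x_j\}$ ($1\le i<j\le n$, root $\varepsilon_j+\varepsilon_i$). *)

theory Defs
  imports "HOL-Analysis.Analysis"
begin

text \<open>The ambient space V is the whole Euclidean space 'a; the arrangement is
given by a set P of positive roots.\<close>

definition root_hyp :: "'a::euclidean_space \<Rightarrow> 'a set" where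
  "root_hyp \<beta> = {x. inner x \<beta> = 0}"

definition arrangement :: "'a::euclidean_space set \<Rightarrow> 'a set set" where
  "arrangement P = root_hyp ` P"

definition base_region :: "'a::euclidean_space set \<Rightarrow> 'a set" where
  "base_region P = {x. \<forall>\<beta>\<in>P. inner x \<beta> > 0}"

definition rank2_sub :: "'a set set \<Rightarrow> 'a set \<Rightarrow> 'a set \<Rightarrow> 'a set set" where
  "rank2_sub A H H' = {H''\<in>A. H \<inter> H' \<subseteq> H''}"

definition base_chamber :: "'a::euclidean_space set set \<Rightarrow> 'a set \<Rightarrow> 'a set \<Rightarrow> 'a set \<Rightarrow> 'a set" where
  "base_chamber A B H H' =
     (THE C. C \<in> components (- \<Union>(rank2_sub A H H')) \<and> B \<subseteq> C)"

definition is_basic :: "'a::euclidean_space set set \<Rightarrow> 'a set \<Rightarrow> 'a set \<Rightarrow> 'a set \<Rightarrow> 'a set \<Rightarrow> bool" where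
  "is_basic A B H H' G \<longleftrightarrow> G \<in> rank2_sub A H H' \<and>
     (\<exists>F. F facet_of closure (base_chamber A B H H') \<and> F \<subseteq> G)"

definition cuts :: "'a::euclidean_space set set \<Rightarrow> 'a set \<Rightarrow> 'a set \<Rightarrow> 'a set \<Rightarrow> bool" where
  "cuts A B G H \<longleftrightarrow> (\<exists>H1 H2. H1 \<in> A \<and> H2 \<in> A \<and> H1 \<noteq> H2 \<and>
     H \<in> rank2_sub A H1 H2 \<and> \<not> is_basic A B H1 H2 H \<and> is_basic A B H1 H2 G)"

definition cutting_set :: "'a::euclidean_space set set \<Rightarrow> 'a set \<Rightarrow> 'a set \<Rightarrow> 'a set set" where
  "cutting_set A B H = {G\<in>A. cuts A B G H}"

definition shards_of :: "'a::euclidean_space set set \<Rightarrow> 'a set \<Rightarrow> 'a set \<Rightarrow> 'a set set" where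
  "shards_of A B H =
     closure ` components (H - \<Union>{H \<inter> G | G. G \<in> cutting_set A B H})"

definition all_shards :: "'a::euclidean_space set set \<Rightarrow> 'a set \<Rightarrow> 'a set set" where
  "all_shards A B = (\<Union>H\<in>A. shards_of A B H)"

text \<open>Coordinates of real^n are labelled 1..n via a bijection \<sigma>;
x_i is x $ \<sigma> i, and eps \<sigma> i is the standard basis vector for coordinate i.\<close>

definition eps :: "(nat \<Rightarrow> 'n::finite) \<Rightarrow> nat \<Rightarrow> real^'n" where
  "eps \<sigma> i = axis (\<sigma> i) 1"

definition posroots_B :: "(nat \<Rightarrow> 'n::finite) \<Rightarrow> nat \<Rightarrow> (real^'n) set" where
  "posroots_B \<sigma> n =
     {eps \<sigma> j - eps \<sigma> i | i j. 1 \<le> i \<and> i < j \<and> j \<le> n}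
   \<union> {eps \<sigma> j + eps \<sigma> i | i j. 1 \<le> i \<and> i < j \<and> j \<le> n}
   \<union> {eps \<sigma> i | i. 1 \<le> i \<and> i \<le> n}"

definition hypB :: "(nat \<Rightarrow> 'n::finite) \<Rightarrow> nat \<Rightarrow> nat \<Rightarrow> (real^'n) set" where
  "hypB \<sigma> i j = (if i = 0 then {x. x $ \<sigma> j = 0} else {x. x $ \<sigma> i = x $ \<sigma> j})"

definition hypB_neg :: "(nat \<Rightarrow> 'n::finite) \<Rightarrow> nat \<Rightarrow> nat \<Rightarrow> (real^'n) set" where
  "hypB_neg \<sigma> i j = {x. x $ \<sigma> i = - (x $ \<sigma> j)}"

end

theory Submission
  imports Defs
begin



definition PX :: "'a::euclidean_space set \<Rightarrow> 'a set \<Rightarrow> 'a set" where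
  "PX P X = {\<gamma>\<in>P. X \<subseteq> root_hyp \<gamma>}"

lemma root_hyp_alt: "root_hyp \<beta> = {x. \<beta> \<bullet> x = 0}"
  by (auto simp: root_hyp_def inner_commute)

lemma rank2_sub_eq: "rank2_sub (arrangement P) H1 H2 = root_hyp ` PX P (H1 \<inter> H2)"
  by (auto simp: rank2_sub_def arrangement_def PX_def)

lemma open_base_region:
  assumes "finite P" shows "open (base_region P)"
proof -
  have "base_region P = (\<Inter>\<gamma>\<in>P. {x. \<gamma> \<bullet> x > 0})"
    by (auto simp: base_region_def inner_commute)
  then show ?thesis using assms by (auto intro!: open_INT open_halfspace_gt)
qed

lemma base_chamber_eq:
  fixes P :: "'a::euclidean_space set"
  assumes b0: "b0 \<in> base_region P"
  shows "base_chamber (arrangement P) (base_region P) H1 H2 = {x. \<forall>\<gamma>\<in>PX P (H1\<inter>H2). inner x \<gamma> > 0}"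
proof -
  let ?Q = "PX P (H1\<inter>H2)"
  define C where "C = {x. \<forall>\<gamma>\<in>?Q. inner x \<gamma> > 0}"
  define S where "S = - \<Union>(rank2_sub (arrangement P) H1 H2)"
  have S: "S = {x. \<forall>\<gamma>\<in>?Q. inner x \<gamma> \<noteq> 0}"
    by (auto simp: S_def rank2_sub_eq root_hyp_def)
  have BC: "base_region P \<subseteq> C" by (auto simp: C_def base_region_def PX_def)
  have "C = (\<Inter>\<gamma>\<in>?Q. {x. \<gamma> \<bullet> x > 0})" by (auto simp: C_def inner_commute)
  then have conv: "convex C" by (auto intro!: convex_INT convex_halfspace_gt)
  have b0C: "b0 \<in> C" using BC b0 by auto
  have CS: "C \<subseteq> S" unfolding S C_def by force
  have comp: "C \<in> components S"
    unfolding in_components_maximal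
  proof (intro conjI allI impI)
    show "C \<noteq> {}" using b0C by auto
    show "C \<subseteq> S" by (rule CS)
    show "connected C" using conv by (rule convex_connected)
    fix D assume D: "D \<noteq> {} \<and> C \<subseteq> D \<and> D \<subseteq> S \<and> connected D"
    have "D \<subseteq> C"
    proof
      fix x assume xD: "x \<in> D"
      show "x \<in> C" unfolding C_def
      proof (intro CollectI ballI)
        fix \<gamma> assume g: "\<gamma> \<in> ?Q"
        show "inner x \<gamma> > 0"
        proof (rule ccontr)
          assume "\<not> inner x \<gamma> > 0"
          then have "\<gamma> \<bullet> x \<le> 0" by (simp add: inner_commute)
          moreover have "0 \<le> \<gamma> \<bullet> b0" using b0C g by (auto simp: C_def inner_commute less_imp_le)
          moreover have "b0 \<in> D" using D b0C by auto
          ultimately obtain z where "z \<in> D" "\<gamma> \<bullet> z = 0"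
            using connected_ivt_hyperplane[of D x b0 \<gamma> 0] D xD by blast
          then show False using D g unfolding S by (auto simp: inner_commute)
        qed
      qed
    qed
    then show "D = C" using D by auto
  qed
  show ?thesis
    unfolding base_chamber_def S_def[symmetric] C_def[symmetric]
  proof (rule the_equality)
    show "C \<in> components S \<and> base_region P \<subseteq> C" using comp BC by auto
    fix C' assume "C' \<in> components S \<and> base_region P \<subseteq> C'"
    then show "C' = C" using comp b0 BC components_eq by blast
  qed
qed


lemma subspace_root_hyp: "subspace (root_hyp \<beta>)"
  by (simp add: root_hyp_alt subspace_hyperplane)

lemma dim_root_hyp: "\<beta> \<noteq> 0 \<Longrightarrow> dim (root_hyp (\<beta>::'a::euclidean_space)) = DIM('a) - 1"
  by (simp add: root_hyp_alt dim_hyperplane)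

lemma DIM_ge1: "DIM('a::euclidean_space) \<ge> 1"
  using DIM_positive[where 'a='a] by linarith

lemma dim_hyp2_lt:
  fixes \<alpha> \<gamma> :: "'a::euclidean_space"
  assumes "\<alpha> \<noteq> 0" "\<gamma> \<noteq> 0" "root_hyp \<alpha> \<noteq> root_hyp \<gamma>"
  shows "dim (root_hyp \<alpha> \<inter> root_hyp \<gamma>) < DIM('a) - 1"
proof (rule ccontr)
  assume "\<not> ?thesis"
  then have le: "dim (root_hyp \<alpha>) \<le> dim (root_hyp \<alpha> \<inter> root_hyp \<gamma>)"
    unfolding dim_root_hyp[OF assms(1)] by linarith
  have "root_hyp \<alpha> \<inter> root_hyp \<gamma> = root_hyp \<alpha>"
    by (rule subspace_dim_equal[OF subspace_inter[OF subspace_root_hyp subspace_root_hyp] subspace_root_hyp _ le]) blast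
  then have sub: "root_hyp \<alpha> \<subseteq> root_hyp \<gamma>" by blast
  have "dim (root_hyp \<gamma>) \<le> dim (root_hyp \<alpha>)"
    unfolding dim_root_hyp[OF assms(1)] dim_root_hyp[OF assms(2)] by simp
  then have "root_hyp \<alpha> = root_hyp \<gamma>"
    by (rule subspace_dim_equal[OF subspace_root_hyp subspace_root_hyp sub])
  then show False using assms by simp
qed

lemma dim_hyp2:
  fixes \<alpha> \<gamma> :: "'a::euclidean_space"
  assumes "\<alpha> \<noteq> 0" "\<gamma> \<noteq> 0" "root_hyp \<alpha> \<noteq> root_hyp \<gamma>"
  shows "dim (root_hyp \<alpha> \<inter> root_hyp \<gamma>) = DIM('a) - 2"
proof -
  have s: "dim {x + y |x y. x \<in> root_hyp \<alpha> \<and> y \<in> root_hyp \<gamma>} + dim (root_hyp \<alpha> \<inter> root_hyp \<gamma>)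
        = dim (root_hyp \<alpha>) + dim (root_hyp \<gamma>)"
    by (rule dim_sums_Int[OF subspace_root_hyp subspace_root_hyp])
  have "dim {x + y |x y. x \<in> root_hyp \<alpha> \<and> y \<in> root_hyp \<gamma>} \<le> DIM('a)"
    by (rule dim_subset_UNIV)
  then show ?thesis using s dim_hyp2_lt[OF assms] dim_root_hyp[OF assms(1)] dim_root_hyp[OF assms(2)]
    DIM_ge1[where 'a='a] by linarith
qed

lemma X_eq:
  fixes \<alpha>1 \<alpha>2 \<beta> \<gamma> :: "'a::euclidean_space"
  assumes "\<alpha>1 \<noteq> 0" "\<alpha>2 \<noteq> 0" "root_hyp \<alpha>1 \<noteq> root_hyp \<alpha>2"
    and "\<beta> \<noteq> 0" "\<gamma> \<noteq> 0" "root_hyp \<beta> \<noteq> root_hyp \<gamma>"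
    and "root_hyp \<alpha>1 \<inter> root_hyp \<alpha>2 \<subseteq> root_hyp \<beta>" "root_hyp \<alpha>1 \<inter> root_hyp \<alpha>2 \<subseteq> root_hyp \<gamma>"
  shows "root_hyp \<beta> \<inter> root_hyp \<gamma> = root_hyp \<alpha>1 \<inter> root_hyp \<alpha>2"
proof (rule subspace_dim_equal[symmetric])
  show "subspace (root_hyp \<alpha>1 \<inter> root_hyp \<alpha>2)" "subspace (root_hyp \<beta> \<inter> root_hyp \<gamma>)"
    by (simp_all add: subspace_inter subspace_root_hyp)
  show "root_hyp \<alpha>1 \<inter> root_hyp \<alpha>2 \<subseteq> root_hyp \<beta> \<inter> root_hyp \<gamma>" using assms by blast
  show "dim (root_hyp \<beta> \<inter> root_hyp \<gamma>) \<le> dim (root_hyp \<alpha>1 \<inter> root_hyp \<alpha>2)"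
    using dim_hyp2[OF assms(1-3)] dim_hyp2[OF assms(4-6)] by simp
qed

lemma aff_dim_root_hyp: "\<beta> \<noteq> 0 \<Longrightarrow> aff_dim (root_hyp (\<beta>::'a::euclidean_space)) = int DIM('a) - 1"
  using DIM_ge1[where 'a='a] by (simp add: aff_dim_subspace subspace_root_hyp dim_root_hyp of_nat_diff)

lemma aff_dim_closure_chamber:
  fixes P :: "'a::euclidean_space set"
  assumes fin: "finite P" and b0: "b0 \<in> base_region P"
  shows "aff_dim (closure (base_chamber (arrangement P) (base_region P) H1 H2)) = int DIM('a)"
proof -
  have "base_region P \<subseteq> {x. \<forall>\<gamma>\<in>PX P (H1\<inter>H2). inner x \<gamma> > 0}"
    by (auto simp: base_region_def PX_def)
  then have "base_region P \<subseteq> base_chamber (arrangement P) (base_region P) H1 H2"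
    by (simp add: base_chamber_eq[OF b0])
  then have "base_region P \<subseteq> closure (base_chamber (arrangement P) (base_region P) H1 H2)"
    using closure_subset by blast
  then have "aff_dim (base_region P) \<le> aff_dim (closure (base_chamber (arrangement P) (base_region P) H1 H2))"
    by (rule aff_dim_subset)
  moreover have "aff_dim (base_region P) = int DIM('a)"
    using aff_dim_open[OF open_base_region[OF fin]] b0 by auto
  ultimately show ?thesis using aff_dim_le_DIM by (metis antisym)
qed

lemma closure_chamber_sub:
  fixes P :: "'a::euclidean_space set"
  assumes b0: "b0 \<in> base_region P" and g: "\<gamma> \<in> PX P (H1 \<inter> H2)"
  shows "closure (base_chamber (arrangement P) (base_region P) H1 H2) \<subseteq> {x. \<gamma> \<bullet> x \<ge> 0}"
proof (rule closure_minimal)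
  show "base_chamber (arrangement P) (base_region P) H1 H2 \<subseteq> {x. \<gamma> \<bullet> x \<ge> 0}"
    using g by (auto simp: base_chamber_eq[OF b0] inner_commute less_imp_le)
  show "closed {x. \<gamma> \<bullet> x \<ge> 0}" by (rule closed_halfspace_ge)
qed

lemma nonbasic_if_comb:
  fixes P :: "'a::euclidean_space set"
  assumes fin: "finite P" and b0: "b0 \<in> base_region P"
    and g1: "\<gamma>1 \<in> PX P (H1 \<inter> H2)" and g2: "\<gamma>2 \<in> PX P (H1 \<inter> H2)"
    and nz: "\<gamma>1 \<noteq> 0" "\<gamma>2 \<noteq> 0" and ne: "root_hyp \<gamma>1 \<noteq> root_hyp \<gamma>2"
    and \<beta>: "\<beta> = a *\<^sub>R \<gamma>1 + c *\<^sub>R \<gamma>2" and ac: "a > 0" "c > 0"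
  shows "\<not> is_basic (arrangement P) (base_region P) H1 H2 (root_hyp \<beta>)"
proof
  assume "is_basic (arrangement P) (base_region P) H1 H2 (root_hyp \<beta>)"
  then obtain F where F: "F facet_of closure (base_chamber (arrangement P) (base_region P) H1 H2)"
    "F \<subseteq> root_hyp \<beta>" unfolding is_basic_def by blast
  let ?K = "closure (base_chamber (arrangement P) (base_region P) H1 H2)"
  have FK: "F \<subseteq> ?K" using F(1) facet_of_imp_subset by blast
  have "F \<subseteq> root_hyp \<gamma>1 \<inter> root_hyp \<gamma>2"
  proof
    fix x assume x: "x \<in> F"
    have h1: "\<gamma>1 \<bullet> x \<ge> 0" "\<gamma>2 \<bullet> x \<ge> 0"
      using closure_chamber_sub[OF b0 g1] closure_chamber_sub[OF b0 g2] FK x by auto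
    have "\<beta> \<bullet> x = 0" using F(2) x by (auto simp: root_hyp_alt)
    then have "a * (\<gamma>1 \<bullet> x) + c * (\<gamma>2 \<bullet> x) = 0" by (simp add: \<beta> inner_add_left)
    moreover have "a * (\<gamma>1 \<bullet> x) \<ge> 0" "c * (\<gamma>2 \<bullet> x) \<ge> 0" using h1 ac by simp_all
    ultimately have "a * (\<gamma>1 \<bullet> x) = 0" "c * (\<gamma>2 \<bullet> x) = 0" by linarith+
    then have "\<gamma>1 \<bullet> x = 0 \<and> \<gamma>2 \<bullet> x = 0" using ac by simp
    then show "x \<in> root_hyp \<gamma>1 \<inter> root_hyp \<gamma>2" by (auto simp: root_hyp_alt)
  qed
  then have "aff_dim F \<le> aff_dim (root_hyp \<gamma>1 \<inter> root_hyp \<gamma>2)" by (rule aff_dim_subset)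
  also have "\<dots> = int (dim (root_hyp \<gamma>1 \<inter> root_hyp \<gamma>2))"
    by (simp add: aff_dim_subspace subspace_inter subspace_root_hyp)
  finally have "aff_dim F < int DIM('a) - 1" using dim_hyp2_lt[OF nz ne] DIM_ge1[where 'a='a] by linarith
  moreover have "aff_dim F = int DIM('a) - 1"
    using F(1) aff_dim_closure_chamber[OF fin b0] unfolding facet_of_def by simp
  ultimately show False by simp
qed

lemma basic_if_witness:
  fixes P :: "'a::euclidean_space set"
  assumes fin: "finite P" and b0: "b0 \<in> base_region P"
    and \<alpha>: "\<alpha> \<in> PX P (H1 \<inter> H2)" "\<alpha> \<noteq> 0"
    and p: "inner p \<alpha> = 0" "\<forall>\<gamma>\<in>PX P (H1\<inter>H2). root_hyp \<gamma> \<noteq> root_hyp \<alpha> \<longrightarrow> inner p \<gamma> > 0"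
  shows "is_basic (arrangement P) (base_region P) H1 H2 (root_hyp \<alpha>)"
proof -
  let ?Q = "PX P (H1 \<inter> H2)"
  let ?C = "base_chamber (arrangement P) (base_region P) H1 H2"
  let ?K = "closure ?C"
  define F where "F = ?K \<inter> {x. (-\<alpha>) \<bullet> x = 0}"
  have Fr: "F = ?K \<inter> root_hyp \<alpha>" by (auto simp: F_def root_hyp_alt)
  have face: "F face_of ?K" unfolding F_def
  proof (rule face_of_Int_supporting_hyperplane_le)
    have "?C = (\<Inter>\<gamma>\<in>?Q. {x. \<gamma> \<bullet> x > 0})" by (auto simp: base_chamber_eq[OF b0] inner_commute)
    then show "convex ?K" by (auto intro!: convex_closure convex_INT convex_halfspace_gt)
    fix x assume "x \<in> ?K"
    then show "(-\<alpha>) \<bullet> x \<le> 0" using closure_chamber_sub[OF b0 \<alpha>(1)] by auto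
  qed
  define U where "U = (\<Inter>\<gamma>\<in>{\<gamma>\<in>?Q. root_hyp \<gamma> \<noteq> root_hyp \<alpha>}. {x. \<gamma> \<bullet> x > 0})"
  have finQ: "finite ?Q" using fin by (simp add: PX_def)
  have oU: "open U" unfolding U_def using finQ by (auto intro!: open_INT open_halfspace_gt)
  have pU: "p \<in> root_hyp \<alpha> \<inter> U" using p by (auto simp: U_def root_hyp_def inner_commute)
  have UF: "root_hyp \<alpha> \<inter> U \<subseteq> F"
  proof
    fix x assume x: "x \<in> root_hyp \<alpha> \<inter> U"
    have "x \<in> ?K"
    proof (rule closure_approachable[THEN iffD2], intro allI impI)
      fix e :: real assume e: "e > 0"
      define t where "t = e / (norm b0 + 1)"
      have nb: "norm b0 + 1 > 0" by (smt (verit) norm_ge_zero)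
      have t: "t > 0" using e nb by (simp add: t_def)
      have "x + t *\<^sub>R b0 \<in> ?C"
        unfolding base_chamber_eq[OF b0]
      proof (intro CollectI ballI)
        fix \<gamma> assume g: "\<gamma> \<in> ?Q"
        have gb: "inner b0 \<gamma> > 0" using b0 g by (auto simp: base_region_def PX_def)
        have "inner x \<gamma> \<ge> 0"
        proof (cases "root_hyp \<gamma> = root_hyp \<alpha>")
          case True
          have "x \<in> root_hyp \<gamma>" using x True by auto
          then show ?thesis by (simp add: root_hyp_def)
        next
          case False then show ?thesis using x g by (auto simp: U_def inner_commute less_imp_le)
        qed
        then show "inner (x + t *\<^sub>R b0) \<gamma> > 0" using gb t
          by (simp add: inner_add_left add_nonneg_pos)
      qed
      moreover have "dist (x + t *\<^sub>R b0) x < e"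
      proof -
        have "dist (x + t *\<^sub>R b0) x = t * norm b0" using t by (simp add: dist_norm)
        also have "\<dots> < e" using e nb unfolding t_def
          by (simp add: divide_simps)
        finally show ?thesis .
      qed
      ultimately show "\<exists>y\<in>?C. dist y x < e" by blast
    qed
    then show "x \<in> F" using x by (simp add: Fr)
  qed
  have "aff_dim (root_hyp \<alpha> \<inter> U) = aff_dim (root_hyp \<alpha>)"
    by (rule aff_dim_convex_Int_open) (use oU pU in \<open>auto simp: root_hyp_alt convex_hyperplane\<close>)
  then have lo: "aff_dim F \<ge> int DIM('a) - 1"
    using aff_dim_subset[OF UF] aff_dim_root_hyp[OF \<alpha>(2)] by simp
  have hi: "aff_dim F \<le> int DIM('a) - 1"
    using aff_dim_subset[of F "root_hyp \<alpha>"] aff_dim_root_hyp[OF \<alpha>(2)] Fr by auto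
  have "F facet_of ?K"
    unfolding facet_of_def using face lo hi pU UF aff_dim_closure_chamber[OF fin b0] by auto
  moreover have "root_hyp \<alpha> \<in> rank2_sub (arrangement P) H1 H2"
    using \<alpha> by (auto simp: rank2_sub_eq)
  ultimately show ?thesis unfolding is_basic_def using Fr by blast
qed


lemma cut_subset:
  fixes P :: "'a::euclidean_space set"
  assumes fin: "finite P" and nz: "0 \<notin> P" and b0: "b0 \<in> base_region P" and \<beta>: "\<beta> \<in> P"
    and p: "inner p \<beta> = 0"
    and bad: "\<forall>\<gamma>\<in>P. inner p \<gamma> > 0 \<or> root_hyp \<gamma> = root_hyp \<beta> \<or> root_hyp \<beta> \<inter> root_hyp \<gamma> \<subseteq> Z"
  shows "\<Union>{root_hyp \<beta> \<inter> G | G. G \<in> cutting_set (arrangement P) (base_region P) (root_hyp \<beta>)} \<subseteq> Z"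
proof (rule Union_least)
  fix Y assume "Y \<in> {root_hyp \<beta> \<inter> G | G. G \<in> cutting_set (arrangement P) (base_region P) (root_hyp \<beta>)}"
  then obtain G where YG: "Y = root_hyp \<beta> \<inter> G" "G \<in> cutting_set (arrangement P) (base_region P) (root_hyp \<beta>)" by blast
  then obtain H1 H2 where H: "H1 \<in> arrangement P" "H2 \<in> arrangement P" "H1 \<noteq> H2"
    "root_hyp \<beta> \<in> rank2_sub (arrangement P) H1 H2"
    "\<not> is_basic (arrangement P) (base_region P) H1 H2 (root_hyp \<beta>)"
    "is_basic (arrangement P) (base_region P) H1 H2 G"
    unfolding cutting_set_def cuts_def by blast
  obtain \<alpha>1 \<alpha>2 where a: "\<alpha>1 \<in> P" "\<alpha>2 \<in> P" "H1 = root_hyp \<alpha>1" "H2 = root_hyp \<alpha>2"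
    using H(1,2) by (auto simp: arrangement_def)
  let ?Q = "PX P (H1 \<inter> H2)"
  have \<beta>Q: "\<beta> \<in> ?Q"
  proof -
    obtain \<beta>' where "\<beta>' \<in> ?Q" "root_hyp \<beta> = root_hyp \<beta>'" using H(4) by (auto simp: rank2_sub_eq)
    then show ?thesis using \<beta> by (auto simp: PX_def)
  qed
  obtain \<delta> where \<delta>: "\<delta> \<in> ?Q" "G = root_hyp \<delta>" using H(6) by (auto simp: is_basic_def rank2_sub_eq)
  have "\<exists>\<gamma>\<in>?Q. root_hyp \<gamma> \<noteq> root_hyp \<beta> \<and> \<not> inner p \<gamma> > 0"
  proof (rule ccontr)
    assume "\<not> ?thesis"
    then have "is_basic (arrangement P) (base_region P) H1 H2 (root_hyp \<beta>)"
      using basic_if_witness[OF fin b0 \<beta>Q _ p] nz \<beta> by blast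
    then show False using H(5) by simp
  qed
  then obtain \<gamma> where g: "\<gamma> \<in> ?Q" "root_hyp \<gamma> \<noteq> root_hyp \<beta>" "\<not> inner p \<gamma> > 0" by blast
  have gP: "\<gamma> \<in> P" using g by (simp add: PX_def)
  have Z: "root_hyp \<beta> \<inter> root_hyp \<gamma> \<subseteq> Z" using bad gP g by blast
  have Gne: "G \<noteq> root_hyp \<beta>" using H(5,6) by auto
  have "root_hyp \<beta> \<inter> root_hyp \<delta> = root_hyp \<alpha>1 \<inter> root_hyp \<alpha>2"
    by (rule X_eq) (use a H(3) nz \<beta> \<delta> Gne \<beta>Q in \<open>auto simp: PX_def\<close>)
  moreover have "root_hyp \<alpha>1 \<inter> root_hyp \<alpha>2 \<subseteq> root_hyp \<beta> \<inter> root_hyp \<gamma>"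
    using g(1) \<beta>Q a by (auto simp: PX_def)
  ultimately show "Y \<subseteq> Z" using Z \<delta> YG by auto
qed

lemma cut_supset:
  fixes P :: "'a::euclidean_space set"
  assumes fin: "finite P" and nz: "0 \<notin> P" and b0: "b0 \<in> base_region P" and \<beta>: "\<beta> \<in> P"
    and \<alpha>: "\<alpha> \<in> P" "root_hyp \<alpha> \<noteq> root_hyp \<beta>"
    and g: "\<gamma>1 \<in> P" "\<gamma>2 \<in> P" "root_hyp \<beta> \<inter> root_hyp \<alpha> \<subseteq> root_hyp \<gamma>1"
       "root_hyp \<beta> \<inter> root_hyp \<alpha> \<subseteq> root_hyp \<gamma>2" "root_hyp \<gamma>1 \<noteq> root_hyp \<gamma>2"
    and comb: "\<beta> = a *\<^sub>R \<gamma>1 + c *\<^sub>R \<gamma>2" "a > 0" "c > 0"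
    and q: "q \<in> root_hyp \<beta> \<inter> root_hyp \<alpha>" and p: "inner p \<alpha> = 0"
    and wit: "\<forall>\<gamma>\<in>P. inner q \<gamma> \<noteq> 0 \<or> inner p \<gamma> > 0 \<or> \<gamma> = \<alpha>"
  shows "root_hyp \<beta> \<inter> root_hyp \<alpha> \<subseteq> \<Union>{root_hyp \<beta> \<inter> G | G. G \<in> cutting_set (arrangement P) (base_region P) (root_hyp \<beta>)}"
proof -
  let ?H1 = "root_hyp \<beta>" and ?H2 = "root_hyp \<alpha>"
  let ?Q = "PX P (?H1 \<inter> ?H2)"
  have \<alpha>Q: "\<alpha> \<in> ?Q" using \<alpha> by (auto simp: PX_def)
  have \<beta>Q: "\<beta> \<in> ?Q" using \<beta> by (auto simp: PX_def)
  have "is_basic (arrangement P) (base_region P) ?H1 ?H2 ?H2"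
  proof (rule basic_if_witness[OF fin b0 \<alpha>Q _ p])
    show "\<alpha> \<noteq> 0" using nz \<alpha> by auto
    show "\<forall>\<gamma>\<in>?Q. root_hyp \<gamma> \<noteq> root_hyp \<alpha> \<longrightarrow> inner p \<gamma> > 0"
    proof (intro ballI impI)
      fix \<gamma> assume "\<gamma> \<in> ?Q" "root_hyp \<gamma> \<noteq> root_hyp \<alpha>"
      moreover then have "inner q \<gamma> = 0" using q by (auto simp: PX_def root_hyp_def)
      ultimately show "inner p \<gamma> > 0" using wit by (auto simp: PX_def)
    qed
  qed
  moreover have "\<not> is_basic (arrangement P) (base_region P) ?H1 ?H2 ?H1"
    by (rule nonbasic_if_comb[OF fin b0 _ _ _ _ g(5) comb]) (use g nz in \<open>auto simp: PX_def\<close>)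
  moreover have "?H1 \<in> rank2_sub (arrangement P) ?H1 ?H2" using \<beta>Q by (auto simp: rank2_sub_eq)
  ultimately have "cuts (arrangement P) (base_region P) ?H2 ?H1"
    unfolding cuts_def using \<alpha> \<beta> by (auto simp: arrangement_def)
  then have "?H2 \<in> cutting_set (arrangement P) (base_region P) ?H1"
    using \<alpha> by (auto simp: cutting_set_def arrangement_def)
  then show ?thesis by blast
qed

lemma shards_disjoint:
  fixes P :: "'a::euclidean_space set"
  assumes fin: "finite P" and nz: "0 \<notin> P" and \<beta>: "\<beta> \<in> P" "\<beta>' \<in> P" "root_hyp \<beta> \<noteq> root_hyp \<beta>'"
  shows "shards_of (arrangement P) B (root_hyp \<beta>) \<inter> shards_of (arrangement P) B (root_hyp \<beta>') = {}"
proof (rule ccontr)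
  assume "\<not> ?thesis"
  then obtain Sh where S1: "Sh \<in> shards_of (arrangement P) B (root_hyp \<beta>)"
    and S2: "Sh \<in> shards_of (arrangement P) B (root_hyp \<beta>')" by blast
  let ?H = "root_hyp \<beta>"
  define Z where "Z = \<Union>{?H \<inter> G | G. G \<in> cutting_set (arrangement P) B ?H}"
  obtain C where C: "C \<in> components (?H - Z)" "Sh = closure C"
    using S1 unfolding shards_of_def Z_def by blast
  obtain C' where C': "C' \<in> components (root_hyp \<beta>' - \<Union>{root_hyp \<beta>' \<inter> G | G. G \<in> cutting_set (arrangement P) B (root_hyp \<beta>')})"
    "Sh = closure C'"
    using S2 unfolding shards_of_def by blast
  have "C' \<subseteq> root_hyp \<beta>'" using C'(1) in_components_subset by blast
  then have "closure C' \<subseteq> root_hyp \<beta>'"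
    by (rule closure_minimal) (simp add: root_hyp_alt closed_hyperplane)
  moreover have "C \<subseteq> closure C" by (rule closure_subset)
  moreover have "C \<subseteq> ?H" using C(1) in_components_subset by blast
  ultimately have CH: "C \<subseteq> ?H \<inter> root_hyp \<beta>'" using C(2) C'(2) by blast
  have finZ: "finite {?H \<inter> G | G. G \<in> cutting_set (arrangement P) B ?H}"
  proof -
    have "cutting_set (arrangement P) B ?H \<subseteq> arrangement P" by (auto simp: cutting_set_def)
    then have "finite (cutting_set (arrangement P) B ?H)" using fin
      by (auto simp: arrangement_def intro: finite_subset)
    then show ?thesis by simp
  qed
  have cl: "closed (root_hyp \<gamma>)" for \<gamma> :: 'a by (simp add: root_hyp_alt closed_hyperplane)
  have "closed Z" unfolding Z_def
  proof (rule closed_Union[OF finZ], clarify)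
    fix G assume "G \<in> cutting_set (arrangement P) B ?H"
    then obtain \<gamma> where "G = root_hyp \<gamma>" by (auto simp: cutting_set_def arrangement_def)
    then show "closed (?H \<inter> G)" using cl by (simp add: closed_Int)
  qed
  then have "openin (top_of_set ?H) (?H - Z)"
  proof -
    assume "closed Z"
    then have "closedin (top_of_set ?H) (?H \<inter> Z)" by (rule closedin_closed_Int)
    then have "openin (top_of_set ?H) (?H - (?H \<inter> Z))" by (rule openin_diff[OF openin_subtopology_self])
    moreover have "?H - (?H \<inter> Z) = ?H - Z" by blast
    ultimately show ?thesis by simp
  qed
  moreover have lc: "locally connected ?H"
    by (rule convex_imp_locally_connected) (simp add: root_hyp_alt convex_hyperplane)
  ultimately have "openin (top_of_set ?H) C"
    using C(1) locally_connected_open_component[THEN iffD1, OF lc] by blast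
  moreover have "C \<noteq> {}" using C(1) in_components_nonempty by blast
  ultimately have "aff_dim C = aff_dim ?H"
    by (intro aff_dim_openin) (auto simp: root_hyp_alt affine_hyperplane)
  also have "\<dots> = int DIM('a) - 1" using nz \<beta> by (intro aff_dim_root_hyp) auto
  finally have "int DIM('a) - 1 \<le> aff_dim (?H \<inter> root_hyp \<beta>')" using aff_dim_subset[OF CH] by simp
  also have "\<dots> = int (dim (?H \<inter> root_hyp \<beta>'))"
    by (simp add: aff_dim_subspace subspace_inter subspace_root_hyp)
  moreover have "\<beta> \<noteq> 0" "\<beta>' \<noteq> 0" using nz \<beta> by auto
  ultimately show False using dim_hyp2_lt[of \<beta> \<beta>'] \<beta>(3) DIM_ge1[where 'a='a] by linarith
qed


lemma card_closure_components_classify: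
  fixes S :: "'a::euclidean_space set" and cls :: "'a \<Rightarrow> 'b"
  assumes fin: "finite Pat"
    and into: "\<forall>x\<in>S. cls x \<in> Pat"
    and ne: "\<forall>s\<in>Pat. \<exists>x\<in>S. cls x = s"
    and conv: "\<forall>s\<in>Pat. convex {x\<in>S. cls x = s}"
    and op: "\<forall>s\<in>Pat. \<exists>U. open U \<and> {x\<in>S. cls x = s} = S \<inter> U"
  shows "card (closure ` components S) = card Pat"
proof -
  define R where "R s = {x\<in>S. cls x = s}" for s
  obtain U where U: "\<And>s. s \<in> Pat \<Longrightarrow> open (U s) \<and> R s = S \<inter> U s"
    using op unfolding R_def by metis
  have Rcomp: "R s \<in> components S" if s: "s \<in> Pat" for s
    unfolding in_components_maximal
  proof (intro conjI allI impI)
    show "R s \<noteq> {}" using ne s by (auto simp: R_def)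
    show "R s \<subseteq> S" by (auto simp: R_def)
    show "connected (R s)" using conv s by (auto simp: R_def intro: convex_connected)
    fix D assume D: "D \<noteq> {} \<and> R s \<subseteq> D \<and> D \<subseteq> S \<and> connected D"
    define V where "V = \<Union>(U ` (Pat - {s}))"
    have oV: "open V" using U by (auto simp: V_def)
    have cov: "D \<subseteq> U s \<union> V"
    proof
      fix x assume x: "x \<in> D"
      then have xS: "x \<in> S" using D by auto
      then have "cls x \<in> Pat" using into by auto
      moreover have "x \<in> R (cls x)" using xS by (auto simp: R_def)
      ultimately show "x \<in> U s \<union> V" using U[of "cls x"] by (cases "cls x = s") (auto simp: V_def)
    qed
    have dis: "U s \<inter> V \<inter> D = {}"
    proof (rule ccontr)
      assume "U s \<inter> V \<inter> D \<noteq> {}"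
      then obtain x t where x: "x \<in> U s" "x \<in> D" "t \<in> Pat" "t \<noteq> s" "x \<in> U t" by (auto simp: V_def)
      then have "x \<in> R s" "x \<in> R t" using U[of s] U[of t] D s by auto
      then show False using x by (auto simp: R_def)
    qed
    have "U s \<inter> D \<noteq> {}" using D \<open>R s \<noteq> {}\<close> U[OF s] by blast
    then have "V \<inter> D = {}" using connectedD[of D "U s" V] D U[OF s] oV cov dis by blast
    then have "D \<subseteq> R s" using cov D U[OF s] by blast
    then show "D = R s" using D by blast
  qed
  have comps: "components S = R ` Pat"
  proof
    show "R ` Pat \<subseteq> components S" using Rcomp by blast
    show "components S \<subseteq> R ` Pat"
    proof
      fix C assume C: "C \<in> components S"
      then obtain x where x: "x \<in> C" using in_components_nonempty by blast
      then have xS: "x \<in> S" using C in_components_subset by blast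
      then have cx: "cls x \<in> Pat" using into by auto
      have "x \<in> R (cls x)" using xS by (auto simp: R_def)
      then have "C = R (cls x)" using components_eq[OF C Rcomp[OF cx]] x by blast
      then show "C \<in> R ` Pat" using cx by blast
    qed
  qed
  have inj: "inj_on (\<lambda>s. closure (R s)) Pat"
  proof (rule inj_onI)
    fix s t assume st: "s \<in> Pat" "t \<in> Pat" "closure (R s) = closure (R t)"
    obtain x where x: "x \<in> R s" using ne st by (auto simp: R_def)
    then have "x \<in> U s" using U[OF st(1)] by auto
    moreover have "x \<in> closure (R t)" using x st closure_subset by blast
    ultimately have "U s \<inter> closure (R t) \<noteq> {}" by blast
    then have "U s \<inter> R t \<noteq> {}" using open_Int_closure_eq_empty U[OF st(1)] by blast
    then obtain y where "y \<in> U s" "y \<in> R t" by blast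
    then have "y \<in> R s" "y \<in> R t" using U[OF st(1)] by (auto simp: R_def)
    then show "s = t" by (auto simp: R_def)
  qed
  have "closure ` components S = (\<lambda>s. closure (R s)) ` Pat" by (simp add: comps image_image)
  then show ?thesis using card_image[OF inj] by simp
qed




definition vecf :: "(nat \<Rightarrow> 'n::finite) \<Rightarrow> nat \<Rightarrow> (nat \<Rightarrow> real) \<Rightarrow> real^'n" where
  "vecf \<sigma> n f = (\<chi> c. f (inv_into {1..n} \<sigma> c))"

lemma pos_comb: "(a::real) > 0 \<Longrightarrow> b > 0 \<Longrightarrow> u \<ge> 0 \<Longrightarrow> v \<ge> 0 \<Longrightarrow> u + v = 1 \<Longrightarrow> u * a + v * b > 0"
  by (smt (verit) mult_nonneg_nonneg mult_pos_pos)

definition lf :: "real \<Rightarrow> 'n::finite \<Rightarrow> real \<Rightarrow> 'n \<Rightarrow> real^'n \<Rightarrow> real" where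
  "lf c1 i1 c2 i2 x = c1 * x$i1 + c2 * x$i2"

lemma open_lf: "open {x. lf c1 i1 c2 i2 x > 0}"
  unfolding lf_def by (intro open_Collect_less continuous_intros)

lemma convex_lf: "convex {x. lf c1 i1 c2 i2 x > 0}"
proof -
  have "{x. lf c1 i1 c2 i2 x > 0} = {x. (c1 *\<^sub>R axis i1 1 + c2 *\<^sub>R axis i2 1) \<bullet> x > 0}"
    by (auto simp: lf_def inner_add_left inner_axis' mult.commute)
  then show ?thesis by (simp add: convex_halfspace_gt)
qed

lemma convex_lf_eq: "convex {x. lf c1 i1 c2 i2 x = 0}"
proof -
  have "{x. lf c1 i1 c2 i2 x = 0} = {x. (c1 *\<^sub>R axis i1 1 + c2 *\<^sub>R axis i2 1) \<bullet> x = 0}"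
    by (auto simp: lf_def inner_add_left inner_axis' mult.commute)
  then show ?thesis by (simp add: convex_hyperplane)
qed

lemma restrict_eq_iff: assumes "s \<in> PiE A B" shows "(restrict f A = s) \<longleftrightarrow> (\<forall>k\<in>A. f k = s k)"
proof
  assume "restrict f A = s"
  then show "\<forall>k\<in>A. f k = s k" by (metis restrict_apply')
next
  note s = assms
  assume h: "\<forall>k\<in>A. f k = s k"
  show "restrict f A = s"
  proof
    fix k show "restrict f A k = s k" using h PiE_arb[OF s, of k] by (cases "k \<in> A") auto
  qed
qed

lemma code3:
  fixes xu xv xk :: real and c :: nat
  assumes "xv = -xu" "xu \<noteq> 0" "xk \<noteq> xu" "xk \<noteq> xv" "c \<in> {0,1,2}"
  shows "((if xk > xu then 1 else 0) + (if xk > xv then 1 else 0) = c) \<longleftrightarrow>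
     ((if c = 0 then 1 else if c = 2 then -1 else (if xu > 0 then 1 else -1)) * (xu - xk) > 0 \<and>
      (if c = 0 then 1 else if c = 2 then -1 else -(if xu > 0 then 1 else -1)) * (xv - xk) > 0)"
  using assms by (cases "xu > 0") auto

context
  fixes \<sigma> :: "nat \<Rightarrow> 'n::finite" and n :: nat
  assumes bij: "bij_betw \<sigma> {1..n} UNIV"
begin

declare inner_diff_right[simp] inner_add_right[simp]

lemma vecf_nth[simp]: "k \<in> {1..n} \<Longrightarrow> vecf \<sigma> n f $ \<sigma> k = f k"
  using bij by (simp add: vecf_def bij_betw_def inv_into_f_f)

lemma vecf_nth'[simp]: "1 \<le> k \<Longrightarrow> k \<le> n \<Longrightarrow> vecf \<sigma> n f $ \<sigma> k = f k"
  by simp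

lemma inner_eps[simp]: "inner x (eps \<sigma> k) = x $ \<sigma> k"
  by (simp add: eps_def inner_axis)

lemma mem_rh_diff[simp]: "x \<in> root_hyp (eps \<sigma> j - eps \<sigma> i) \<longleftrightarrow> x$\<sigma> j = x$\<sigma> i"
  by (simp add: root_hyp_def inner_diff_right)

lemma mem_rh_sum[simp]: "x \<in> root_hyp (eps \<sigma> j + eps \<sigma> i) \<longleftrightarrow> x$\<sigma> i = - x$\<sigma> j"
  by (auto simp: root_hyp_def inner_add_right)

lemma mem_rh_eps[simp]: "x \<in> root_hyp (eps \<sigma> j) \<longleftrightarrow> x$\<sigma> j = 0"
  by (simp add: root_hyp_def)

lemma ball_PB: "(\<forall>\<gamma>\<in>posroots_B \<sigma> n. Q \<gamma>) \<longleftrightarrow>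
   (\<forall>i j. 1\<le>i \<longrightarrow> i<j \<longrightarrow> j\<le>n \<longrightarrow> Q (eps \<sigma> j - eps \<sigma> i) \<and> Q (eps \<sigma> j + eps \<sigma> i))
   \<and> (\<forall>i. 1\<le>i \<longrightarrow> i\<le>n \<longrightarrow> Q (eps \<sigma> i))"
  unfolding posroots_B_def by blast

lemma finite_PB: "finite (posroots_B \<sigma> n)"
proof -
  have "posroots_B \<sigma> n \<subseteq> (\<lambda>(i,j). eps \<sigma> j - eps \<sigma> i) ` ({1..n}\<times>{1..n})
     \<union> (\<lambda>(i,j). eps \<sigma> j + eps \<sigma> i) ` ({1..n}\<times>{1..n}) \<union> eps \<sigma> ` {1..n}"
    unfolding posroots_B_def by force
  then show ?thesis by (rule finite_subset) auto
qed

definition b0 :: "real^'n" where "b0 = vecf \<sigma> n real"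

lemma b0_base: "b0 \<in> base_region (posroots_B \<sigma> n)"
  unfolding base_region_def b0_def by (auto simp: ball_PB)

lemma nz_PB: "0 \<notin> posroots_B \<sigma> n"
  using b0_base by (force simp: base_region_def)

lemmas cut_subset_B = cut_subset[OF finite_PB nz_PB b0_base]
lemmas cut_supset_B = cut_supset[OF finite_PB nz_PB b0_base]

lemma eps_in: "1 \<le> i \<Longrightarrow> i \<le> n \<Longrightarrow> eps \<sigma> i \<in> posroots_B \<sigma> n"
  by (auto simp: posroots_B_def)
lemma diff_in: "1 \<le> i \<Longrightarrow> i < j \<Longrightarrow> j \<le> n \<Longrightarrow> eps \<sigma> j - eps \<sigma> i \<in> posroots_B \<sigma> n"
  by (auto simp: posroots_B_def)
lemma sum_in: "1 \<le> i \<Longrightarrow> i < j \<Longrightarrow> j \<le> n \<Longrightarrow> eps \<sigma> j + eps \<sigma> i \<in> posroots_B \<sigma> n"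
  by (auto simp: posroots_B_def)

section \<open>Type H_{0,b}\<close>

definition Z0 :: "nat \<Rightarrow> (real^'n) set" where
  "Z0 b = {x. x$\<sigma> b = 0 \<and> (\<exists>k\<in>{1..<b}. x$\<sigma> k = 0)}"

lemma cut0_sub:
  assumes b: "1 \<le> b" "b \<le> n"
  shows "\<Union>{root_hyp (eps \<sigma> b) \<inter> G | G. G \<in> cutting_set (arrangement (posroots_B \<sigma> n)) (base_region (posroots_B \<sigma> n)) (root_hyp (eps \<sigma> b))} \<subseteq> Z0 b"
proof (rule cut_subset_B[OF eps_in[OF b], where p = "vecf \<sigma> n (\<lambda>m. if m = b then 0 else real m)"])
  show "inner (vecf \<sigma> n (\<lambda>m. if m = b then 0 else real m)) (eps \<sigma> b) = 0" using b by simp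
  show "\<forall>\<gamma>\<in>posroots_B \<sigma> n. inner (vecf \<sigma> n (\<lambda>m. if m = b then 0 else real m)) \<gamma> > 0 \<or>
      root_hyp \<gamma> = root_hyp (eps \<sigma> b) \<or> root_hyp (eps \<sigma> b) \<inter> root_hyp \<gamma> \<subseteq> Z0 b"
    unfolding ball_PB
  proof (intro conjI allI impI)
    fix i j :: nat assume ij: "1 \<le> i" "i < j" "j \<le> n"
    show "inner (vecf \<sigma> n (\<lambda>m. if m = b then 0 else real m)) (eps \<sigma> j - eps \<sigma> i) > 0 \<or>
      root_hyp (eps \<sigma> j - eps \<sigma> i) = root_hyp (eps \<sigma> b) \<or> root_hyp (eps \<sigma> b) \<inter> root_hyp (eps \<sigma> j - eps \<sigma> i) \<subseteq> Z0 b"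
      using ij by (cases "j = b") (auto simp: Z0_def inner_diff_right)
    show "inner (vecf \<sigma> n (\<lambda>m. if m = b then 0 else real m)) (eps \<sigma> j + eps \<sigma> i) > 0 \<or>
      root_hyp (eps \<sigma> j + eps \<sigma> i) = root_hyp (eps \<sigma> b) \<or> root_hyp (eps \<sigma> b) \<inter> root_hyp (eps \<sigma> j + eps \<sigma> i) \<subseteq> Z0 b"
      using ij by (auto simp: inner_add_right)
  next
    fix i :: nat assume i: "1 \<le> i" "i \<le> n"
    show "inner (vecf \<sigma> n (\<lambda>m. if m = b then 0 else real m)) (eps \<sigma> i) > 0 \<or>
      root_hyp (eps \<sigma> i) = root_hyp (eps \<sigma> b) \<or> root_hyp (eps \<sigma> b) \<inter> root_hyp (eps \<sigma> i) \<subseteq> Z0 b"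
      using i by auto
  qed
qed

lemma cut0_sup:
  assumes b: "1 \<le> b" "b \<le> n"
  shows "Z0 b \<subseteq> \<Union>{root_hyp (eps \<sigma> b) \<inter> G | G. G \<in> cutting_set (arrangement (posroots_B \<sigma> n)) (base_region (posroots_B \<sigma> n)) (root_hyp (eps \<sigma> b))}"
proof
  fix x assume "x \<in> Z0 b"
  then obtain k where k: "1 \<le> k" "k < b" "x $ \<sigma> b = 0" "x $ \<sigma> k = 0" by (auto simp: Z0_def)
  have "x \<in> root_hyp (eps \<sigma> b) \<inter> root_hyp (eps \<sigma> k)" using k by simp
  moreover have "root_hyp (eps \<sigma> b) \<inter> root_hyp (eps \<sigma> k) \<subseteq> \<Union>{root_hyp (eps \<sigma> b) \<inter> G | G. G \<in> cutting_set (arrangement (posroots_B \<sigma> n)) (base_region (posroots_B \<sigma> n)) (root_hyp (eps \<sigma> b))}"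
  proof (rule cut_supset_B[OF eps_in[OF b] eps_in _ diff_in eps_in, where a=1 and c=1
        and q = "vecf \<sigma> n (\<lambda>m. if m = b \<or> m = k then 0 else real m)"
        and p = "vecf \<sigma> n (\<lambda>m. if m = b then 1 else 0)"])
    show "root_hyp (eps \<sigma> k) \<noteq> root_hyp (eps \<sigma> b)"
    proof
      assume "root_hyp (eps \<sigma> k) = root_hyp (eps \<sigma> b)"
      moreover have "vecf \<sigma> n (\<lambda>m. if m = k then 0 else 1) \<in> root_hyp (eps \<sigma> k)" using k b by simp
      ultimately show False using k b by auto
    qed
    show "root_hyp (eps \<sigma> b - eps \<sigma> k) \<noteq> root_hyp (eps \<sigma> k)"
    proof
      assume "root_hyp (eps \<sigma> b - eps \<sigma> k) = root_hyp (eps \<sigma> k)"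
      moreover have "vecf \<sigma> n (\<lambda>m. 1) \<in> root_hyp (eps \<sigma> b - eps \<sigma> k)" using k b by simp
      ultimately show False using k b by auto
    qed
    show "\<forall>\<gamma>\<in>posroots_B \<sigma> n. inner (vecf \<sigma> n (\<lambda>m. if m = b \<or> m = k then 0 else real m)) \<gamma> \<noteq> 0 \<or>
        inner (vecf \<sigma> n (\<lambda>m. if m = b then 1 else 0)) \<gamma> > 0 \<or> \<gamma> = eps \<sigma> k"
      unfolding ball_PB
    proof (intro conjI allI impI)
      fix i j :: nat assume ij: "1 \<le> i" "i < j" "j \<le> n"
      show "inner (vecf \<sigma> n (\<lambda>m. if m = b \<or> m = k then 0 else real m)) (eps \<sigma> j - eps \<sigma> i) \<noteq> 0 \<or>
        inner (vecf \<sigma> n (\<lambda>m. if m = b then 1 else 0)) (eps \<sigma> j - eps \<sigma> i) > 0 \<or> eps \<sigma> j - eps \<sigma> i = eps \<sigma> k"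
        using ij k b by auto
      show "inner (vecf \<sigma> n (\<lambda>m. if m = b \<or> m = k then 0 else real m)) (eps \<sigma> j + eps \<sigma> i) \<noteq> 0 \<or>
        inner (vecf \<sigma> n (\<lambda>m. if m = b then 1 else 0)) (eps \<sigma> j + eps \<sigma> i) > 0 \<or> eps \<sigma> j + eps \<sigma> i = eps \<sigma> k"
        using ij k b by auto
    next
      fix i :: nat assume i: "1 \<le> i" "i \<le> n"
      show "inner (vecf \<sigma> n (\<lambda>m. if m = b \<or> m = k then 0 else real m)) (eps \<sigma> i) \<noteq> 0 \<or>
        inner (vecf \<sigma> n (\<lambda>m. if m = b then 1 else 0)) (eps \<sigma> i) > 0 \<or> eps \<sigma> i = eps \<sigma> k"
        using i k b by auto
    qed
    show "eps \<sigma> b = 1 *\<^sub>R (eps \<sigma> b - eps \<sigma> k) + 1 *\<^sub>R eps \<sigma> k" by simp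
    show "root_hyp (eps \<sigma> b) \<inter> root_hyp (eps \<sigma> k) \<subseteq> root_hyp (eps \<sigma> b - eps \<sigma> k)" by auto
    show "root_hyp (eps \<sigma> b) \<inter> root_hyp (eps \<sigma> k) \<subseteq> root_hyp (eps \<sigma> k)" by auto
    show "vecf \<sigma> n (\<lambda>m. if m = b \<or> m = k then 0 else real m) \<in> root_hyp (eps \<sigma> b) \<inter> root_hyp (eps \<sigma> k)"
      using k b by simp
    show "inner (vecf \<sigma> n (\<lambda>m. if m = b then 1 else 0)) (eps \<sigma> k) = 0" using k b by simp
  qed (use k b in simp_all)
  ultimately show "x \<in> \<Union>{root_hyp (eps \<sigma> b) \<inter> G | G. G \<in> cutting_set (arrangement (posroots_B \<sigma> n)) (base_region (posroots_B \<sigma> n)) (root_hyp (eps \<sigma> b))}"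
    by blast
qed

lemma shards0:
  assumes b: "1 \<le> b" "b \<le> n"
  shows "card (shards_of (arrangement (posroots_B \<sigma> n)) (base_region (posroots_B \<sigma> n)) (root_hyp (eps \<sigma> b))) = 2 ^ (b - 1)"
proof -
  let ?H = "root_hyp (eps \<sigma> b)"
  let ?S = "?H - Z0 b"
  have U: "\<Union>{?H \<inter> G | G. G \<in> cutting_set (arrangement (posroots_B \<sigma> n)) (base_region (posroots_B \<sigma> n)) ?H} = Z0 b"
    using cut0_sub[OF b] cut0_sup[OF b] by (rule antisym)
  have sh: "shards_of (arrangement (posroots_B \<sigma> n)) (base_region (posroots_B \<sigma> n)) ?H = closure ` components ?S"
    unfolding shards_of_def U by simp
  let ?Pat = "PiE {1..<b} (\<lambda>_. UNIV :: bool set)"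
  let ?cls = "\<lambda>x::real^'n. restrict (\<lambda>k. x$\<sigma> k > 0) {1..<b}"
  define Uo where "Uo s = (\<Inter>k\<in>{1..<b}. {x. lf (if s k then 1 else -1) (\<sigma> k) 0 (\<sigma> k) x > 0})" for s :: "nat \<Rightarrow> bool"
  have Uo_iff: "x \<in> Uo s \<longleftrightarrow> (\<forall>k\<in>{1..<b}. if s k then x$\<sigma> k > 0 else x$\<sigma> k < 0)" for x s
  proof -
    have "(lf (if s k then 1 else -1) (\<sigma> k) 0 (\<sigma> k) x > 0) = (if s k then x$\<sigma> k > 0 else x$\<sigma> k < 0)" for k
      by (simp add: lf_def)
    then show ?thesis by (simp add: Uo_def)
  qed
  have fib: "{x\<in>?S. ?cls x = s} = ?S \<inter> Uo s" "{x\<in>?S. ?cls x = s} = ?H \<inter> Uo s" if s: "s \<in> ?Pat" for s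
  proof -
    have "(?cls x = s) \<longleftrightarrow> x \<in> Uo s" if x: "x \<in> ?S" for x
    proof -
      have nz: "\<forall>k\<in>{1..<b}. x$\<sigma> k \<noteq> 0" using x by (auto simp: Z0_def)
      have "(?cls x = s) \<longleftrightarrow> (\<forall>k\<in>{1..<b}. (x$\<sigma> k > 0) = s k)" by (rule restrict_eq_iff[OF s])
      also have "\<dots> \<longleftrightarrow> x \<in> Uo s" unfolding Uo_iff
      proof (intro ball_cong refl)
        fix k assume "k \<in> {1..<b}"
        then have "x$\<sigma> k \<noteq> 0" using nz by blast
        then show "((x$\<sigma> k > 0) = s k) = (if s k then x$\<sigma> k > 0 else x$\<sigma> k < 0)" by auto
      qed
      finally show ?thesis .
    qed
    then show "{x\<in>?S. ?cls x = s} = ?S \<inter> Uo s" by blast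
    moreover have "?H \<inter> Uo s \<subseteq> ?S"
    proof
      fix x assume x: "x \<in> ?H \<inter> Uo s"
      have "x$\<sigma> k \<noteq> 0" if "k \<in> {1..<b}" for k
      proof -
        have "x \<in> Uo s" using x by blast
        then have "if s k then x$\<sigma> k > 0 else x$\<sigma> k < 0" using that unfolding Uo_iff by blast
        then show ?thesis by (auto split: if_splits)
      qed
      then show "x \<in> ?S" using x by (auto simp: Z0_def)
    qed
    ultimately show "{x\<in>?S. ?cls x = s} = ?H \<inter> Uo s" by blast
  qed
  have oU: "open (Uo s)" for s unfolding Uo_def by (intro open_INT finite_atLeastLessThan ballI open_lf)
  have cU: "convex (Uo s)" for s unfolding Uo_def by (intro convex_INT ballI convex_lf)
  have cH: "convex ?H" by (simp add: root_hyp_alt convex_hyperplane)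
  have "card (closure ` components ?S) = card ?Pat"
  proof (rule card_closure_components_classify)
    show "finite ?Pat" by (simp add: finite_PiE)
    show "\<forall>x\<in>?S. ?cls x \<in> ?Pat" by simp
    show "\<forall>s\<in>?Pat. \<exists>x\<in>?S. ?cls x = s"
    proof
      fix s assume s: "s \<in> ?Pat"
      define x where "x = vecf \<sigma> n (\<lambda>m. if m < b then (if s m then 1 else -1) else 0)"
      have xk: "x $ \<sigma> k = (if k < b then (if s k then 1 else -1) else 0)" if "1 \<le> k" "k \<le> n" for k
        using that by (simp add: x_def)
      have "x$\<sigma> b = 0" using b xk by simp
      moreover have "x$\<sigma> k \<noteq> 0" if "k \<in> {1..<b}" for k using that b xk[of k] by simp
      ultimately have "x \<in> ?S" by (auto simp: Z0_def)
      moreover have "?cls x = s" unfolding restrict_eq_iff[OF s]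
      proof
        fix k assume "k \<in> {1..<b}"
        then show "(x$\<sigma> k > 0) = s k" using b xk[of k] by simp
      qed
      ultimately show "\<exists>x\<in>?S. ?cls x = s" by blast
    qed
    show "\<forall>s\<in>?Pat. convex {x\<in>?S. ?cls x = s}"
    proof
      fix s assume "s \<in> ?Pat"
      then have e: "{x\<in>?S. ?cls x = s} = ?H \<inter> Uo s" by (rule fib(2))
      have "convex (?H \<inter> Uo s)" using cH cU[of s] by (rule convex_Int)
      then show "convex {x\<in>?S. ?cls x = s}" by (simp only: e)
    qed
    show "\<forall>s\<in>?Pat. \<exists>U. open U \<and> {x\<in>?S. ?cls x = s} = ?S \<inter> U"
    proof
      fix s assume "s \<in> ?Pat"
      then show "\<exists>U. open U \<and> {x\<in>?S. ?cls x = s} = ?S \<inter> U" using fib(1)[OF \<open>s \<in> ?Pat\<close>] oU[of s] by blast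
    qed
  qed
  also have "card ?Pat = (\<Prod>k\<in>{1..<b}. card (UNIV :: bool set))"
    by (rule card_PiE) simp
  also have "\<dots> = 2 ^ (b - 1)" by (simp add: card_UNIV_bool)
  finally show ?thesis unfolding sh .
qed

section \<open>Type H_{a,b}\<close>

definition ZA :: "nat \<Rightarrow> nat \<Rightarrow> (real^'n) set" where
  "ZA a b = {x. x$\<sigma> a = x$\<sigma> b \<and> (\<exists>k\<in>{a<..<b}. x$\<sigma> k = x$\<sigma> a)}"

lemma cutA_sub:
  assumes ab: "1 \<le> a" "a < b" "b \<le> n"
  shows "\<Union>{root_hyp (eps \<sigma> b - eps \<sigma> a) \<inter> G | G. G \<in> cutting_set (arrangement (posroots_B \<sigma> n)) (base_region (posroots_B \<sigma> n)) (root_hyp (eps \<sigma> b - eps \<sigma> a))} \<subseteq> ZA a b"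
proof (rule cut_subset_B[OF diff_in[OF ab], where p = "vecf \<sigma> n (\<lambda>m. if m = b then real a else real m)"])
  show "inner (vecf \<sigma> n (\<lambda>m. if m = b then real a else real m)) (eps \<sigma> b - eps \<sigma> a) = 0" using ab by simp
  show "\<forall>\<gamma>\<in>posroots_B \<sigma> n. inner (vecf \<sigma> n (\<lambda>m. if m = b then real a else real m)) \<gamma> > 0 \<or>
      root_hyp \<gamma> = root_hyp (eps \<sigma> b - eps \<sigma> a) \<or> root_hyp (eps \<sigma> b - eps \<sigma> a) \<inter> root_hyp \<gamma> \<subseteq> ZA a b"
    unfolding ball_PB
  proof (intro conjI allI impI)
    fix i j :: nat assume ij: "1 \<le> i" "i < j" "j \<le> n"
    show "inner (vecf \<sigma> n (\<lambda>m. if m = b then real a else real m)) (eps \<sigma> j - eps \<sigma> i) > 0 \<or>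
      root_hyp (eps \<sigma> j - eps \<sigma> i) = root_hyp (eps \<sigma> b - eps \<sigma> a) \<or> root_hyp (eps \<sigma> b - eps \<sigma> a) \<inter> root_hyp (eps \<sigma> j - eps \<sigma> i) \<subseteq> ZA a b"
    proof (cases "j = b")
      case True
      show ?thesis
      proof (cases "i = a")
        case True then show ?thesis using \<open>j = b\<close> by simp
      next
        case False
        show ?thesis
        proof (cases "i < a")
          case True then show ?thesis using \<open>j = b\<close> ij ab by simp
        next
          case False
          then have "a < i" using \<open>i \<noteq> a\<close> by simp
          then show ?thesis using \<open>j = b\<close> ij by (auto simp: ZA_def)
        qed
      qed
    next
      case False then show ?thesis using ij ab by auto
    qed
    show "inner (vecf \<sigma> n (\<lambda>m. if m = b then real a else real m)) (eps \<sigma> j + eps \<sigma> i) > 0 \<or>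
      root_hyp (eps \<sigma> j + eps \<sigma> i) = root_hyp (eps \<sigma> b - eps \<sigma> a) \<or> root_hyp (eps \<sigma> b - eps \<sigma> a) \<inter> root_hyp (eps \<sigma> j + eps \<sigma> i) \<subseteq> ZA a b"
      using ij ab by auto
  next
    fix i :: nat assume i: "1 \<le> i" "i \<le> n"
    show "inner (vecf \<sigma> n (\<lambda>m. if m = b then real a else real m)) (eps \<sigma> i) > 0 \<or>
      root_hyp (eps \<sigma> i) = root_hyp (eps \<sigma> b - eps \<sigma> a) \<or> root_hyp (eps \<sigma> b - eps \<sigma> a) \<inter> root_hyp (eps \<sigma> i) \<subseteq> ZA a b"
      using i ab by auto
  qed
qed

lemma cutA_sup:
  assumes ab: "1 \<le> a" "a < b" "b \<le> n"
  shows "ZA a b \<subseteq> \<Union>{root_hyp (eps \<sigma> b - eps \<sigma> a) \<inter> G | G. G \<in> cutting_set (arrangement (posroots_B \<sigma> n)) (base_region (posroots_B \<sigma> n)) (root_hyp (eps \<sigma> b - eps \<sigma> a))}"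
proof
  fix x assume "x \<in> ZA a b"
  then obtain k where k: "a < k" "k < b" "x $ \<sigma> a = x $ \<sigma> b" "x $ \<sigma> k = x $ \<sigma> a" by (auto simp: ZA_def)
  have "x \<in> root_hyp (eps \<sigma> b - eps \<sigma> a) \<inter> root_hyp (eps \<sigma> k - eps \<sigma> a)" using k by simp
  moreover have "root_hyp (eps \<sigma> b - eps \<sigma> a) \<inter> root_hyp (eps \<sigma> k - eps \<sigma> a) \<subseteq> \<Union>{root_hyp (eps \<sigma> b - eps \<sigma> a) \<inter> G | G. G \<in> cutting_set (arrangement (posroots_B \<sigma> n)) (base_region (posroots_B \<sigma> n)) (root_hyp (eps \<sigma> b - eps \<sigma> a))}"
  proof (rule cut_supset_B[OF diff_in[OF ab] diff_in _ diff_in diff_in, where a=1 and c=1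
        and q = "vecf \<sigma> n (\<lambda>m. if m = a \<or> m = k \<or> m = b then real n + 1 else real m)"
        and p = "vecf \<sigma> n (\<lambda>m. if m = b then 1 else 0)"])
    show "root_hyp (eps \<sigma> k - eps \<sigma> a) \<noteq> root_hyp (eps \<sigma> b - eps \<sigma> a)"
    proof
      assume "root_hyp (eps \<sigma> k - eps \<sigma> a) = root_hyp (eps \<sigma> b - eps \<sigma> a)"
      moreover have "vecf \<sigma> n (\<lambda>m. if m = k then 0 else 1) \<in> root_hyp (eps \<sigma> b - eps \<sigma> a)" using k ab by simp
      ultimately have "vecf \<sigma> n (\<lambda>m. if m = k then 0 else 1) \<in> root_hyp (eps \<sigma> k - eps \<sigma> a)" by simp
      then show False using k ab by simp
    qed
    show "root_hyp (eps \<sigma> b - eps \<sigma> k) \<noteq> root_hyp (eps \<sigma> k - eps \<sigma> a)"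
    proof
      assume "root_hyp (eps \<sigma> b - eps \<sigma> k) = root_hyp (eps \<sigma> k - eps \<sigma> a)"
      moreover have "vecf \<sigma> n (\<lambda>m. if m = b then 1 else 0) \<in> root_hyp (eps \<sigma> k - eps \<sigma> a)" using k ab by simp
      ultimately have "vecf \<sigma> n (\<lambda>m. if m = b then 1 else 0) \<in> root_hyp (eps \<sigma> b - eps \<sigma> k)" by simp
      then show False using k ab by simp
    qed
    show "\<forall>\<gamma>\<in>posroots_B \<sigma> n. inner (vecf \<sigma> n (\<lambda>m. if m = a \<or> m = k \<or> m = b then real n + 1 else real m)) \<gamma> \<noteq> 0 \<or>
        inner (vecf \<sigma> n (\<lambda>m. if m = b then 1 else 0)) \<gamma> > 0 \<or> \<gamma> = eps \<sigma> k - eps \<sigma> a"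
      unfolding ball_PB
    proof (intro conjI allI impI)
      fix i j :: nat assume ij: "1 \<le> i" "i < j" "j \<le> n"
      show "inner (vecf \<sigma> n (\<lambda>m. if m = a \<or> m = k \<or> m = b then real n + 1 else real m)) (eps \<sigma> j - eps \<sigma> i) \<noteq> 0 \<or>
        inner (vecf \<sigma> n (\<lambda>m. if m = b then 1 else 0)) (eps \<sigma> j - eps \<sigma> i) > 0 \<or> eps \<sigma> j - eps \<sigma> i = eps \<sigma> k - eps \<sigma> a"
        using ij k ab by auto
      show "inner (vecf \<sigma> n (\<lambda>m. if m = a \<or> m = k \<or> m = b then real n + 1 else real m)) (eps \<sigma> j + eps \<sigma> i) \<noteq> 0 \<or>
        inner (vecf \<sigma> n (\<lambda>m. if m = b then 1 else 0)) (eps \<sigma> j + eps \<sigma> i) > 0 \<or> eps \<sigma> j + eps \<sigma> i = eps \<sigma> k - eps \<sigma> a"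
        using ij k ab by auto
    next
      fix i :: nat assume i: "1 \<le> i" "i \<le> n"
      show "inner (vecf \<sigma> n (\<lambda>m. if m = a \<or> m = k \<or> m = b then real n + 1 else real m)) (eps \<sigma> i) \<noteq> 0 \<or>
        inner (vecf \<sigma> n (\<lambda>m. if m = b then 1 else 0)) (eps \<sigma> i) > 0 \<or> eps \<sigma> i = eps \<sigma> k - eps \<sigma> a"
        using i k ab by auto
    qed
    show "eps \<sigma> b - eps \<sigma> a = 1 *\<^sub>R (eps \<sigma> b - eps \<sigma> k) + 1 *\<^sub>R (eps \<sigma> k - eps \<sigma> a)" by simp
    show "root_hyp (eps \<sigma> b - eps \<sigma> a) \<inter> root_hyp (eps \<sigma> k - eps \<sigma> a) \<subseteq> root_hyp (eps \<sigma> b - eps \<sigma> k)" by auto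
    show "root_hyp (eps \<sigma> b - eps \<sigma> a) \<inter> root_hyp (eps \<sigma> k - eps \<sigma> a) \<subseteq> root_hyp (eps \<sigma> k - eps \<sigma> a)" by auto
    show "vecf \<sigma> n (\<lambda>m. if m = a \<or> m = k \<or> m = b then real n + 1 else real m) \<in> root_hyp (eps \<sigma> b - eps \<sigma> a) \<inter> root_hyp (eps \<sigma> k - eps \<sigma> a)"
      using k ab by simp
    show "inner (vecf \<sigma> n (\<lambda>m. if m = b then 1 else 0)) (eps \<sigma> k - eps \<sigma> a) = 0" using k ab by simp
  qed (use k ab in simp_all)
  ultimately show "x \<in> \<Union>{root_hyp (eps \<sigma> b - eps \<sigma> a) \<inter> G | G. G \<in> cutting_set (arrangement (posroots_B \<sigma> n)) (base_region (posroots_B \<sigma> n)) (root_hyp (eps \<sigma> b - eps \<sigma> a))}"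
    by blast
qed

lemma shardsA:
  assumes ab: "1 \<le> a" "a < b" "b \<le> n"
  shows "card (shards_of (arrangement (posroots_B \<sigma> n)) (base_region (posroots_B \<sigma> n)) (root_hyp (eps \<sigma> b - eps \<sigma> a))) = 2 ^ (b - a - 1)"
proof -
  let ?H = "root_hyp (eps \<sigma> b - eps \<sigma> a)"
  let ?S = "?H - ZA a b"
  have U: "\<Union>{?H \<inter> G | G. G \<in> cutting_set (arrangement (posroots_B \<sigma> n)) (base_region (posroots_B \<sigma> n)) ?H} = ZA a b"
    using cutA_sub[OF ab] cutA_sup[OF ab] by (rule antisym)
  have sh: "shards_of (arrangement (posroots_B \<sigma> n)) (base_region (posroots_B \<sigma> n)) ?H = closure ` components ?S"
    unfolding shards_of_def U by simp
  let ?Pat = "PiE {a<..<b} (\<lambda>_. UNIV :: bool set)"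
  let ?cls = "\<lambda>x::real^'n. restrict (\<lambda>k. x$\<sigma> k > x$\<sigma> a) {a<..<b}"
  define Uo where "Uo s = (\<Inter>k\<in>{a<..<b}. {x. lf (if s k then 1 else -1) (\<sigma> k) (if s k then -1 else 1) (\<sigma> a) x > 0})" for s :: "nat \<Rightarrow> bool"
  have Uo_iff: "x \<in> Uo s \<longleftrightarrow> (\<forall>k\<in>{a<..<b}. if s k then x$\<sigma> k > x$\<sigma> a else x$\<sigma> k < x$\<sigma> a)" for x s
  proof -
    have "(lf (if s k then 1 else -1) (\<sigma> k) (if s k then -1 else 1) (\<sigma> a) x > 0) = (if s k then x$\<sigma> k > x$\<sigma> a else x$\<sigma> k < x$\<sigma> a)" for k
      by (simp add: lf_def)
    then show ?thesis by (simp add: Uo_def)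
  qed
  have fib: "{x\<in>?S. ?cls x = s} = ?S \<inter> Uo s" "{x\<in>?S. ?cls x = s} = ?H \<inter> Uo s" if s: "s \<in> ?Pat" for s
  proof -
    have "(?cls x = s) \<longleftrightarrow> x \<in> Uo s" if x: "x \<in> ?S" for x
    proof -
      have nz: "\<forall>k\<in>{a<..<b}. x$\<sigma> k \<noteq> x$\<sigma> a" using x by (auto simp: ZA_def)
      have "(?cls x = s) \<longleftrightarrow> (\<forall>k\<in>{a<..<b}. (x$\<sigma> k > x$\<sigma> a) = s k)" by (rule restrict_eq_iff[OF s])
      also have "\<dots> \<longleftrightarrow> x \<in> Uo s" unfolding Uo_iff
      proof (intro ball_cong refl)
        fix k assume "k \<in> {a<..<b}"
        then have "x$\<sigma> k \<noteq> x$\<sigma> a" using nz by blast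
        then show "((x$\<sigma> k > x$\<sigma> a) = s k) = (if s k then x$\<sigma> k > x$\<sigma> a else x$\<sigma> k < x$\<sigma> a)" by auto
      qed
      finally show ?thesis .
    qed
    then show "{x\<in>?S. ?cls x = s} = ?S \<inter> Uo s" by blast
    moreover have "?H \<inter> Uo s \<subseteq> ?S"
    proof
      fix x assume x: "x \<in> ?H \<inter> Uo s"
      have "x$\<sigma> k \<noteq> x$\<sigma> a" if "k \<in> {a<..<b}" for k
      proof -
        have "x \<in> Uo s" using x by blast
        then have "if s k then x$\<sigma> k > x$\<sigma> a else x$\<sigma> k < x$\<sigma> a" using that unfolding Uo_iff by blast
        then show ?thesis by (auto split: if_splits)
      qed
      then show "x \<in> ?S" using x by (auto simp: ZA_def)
    qed
    ultimately show "{x\<in>?S. ?cls x = s} = ?H \<inter> Uo s" by blast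
  qed
  have oU: "open (Uo s)" for s unfolding Uo_def by (intro open_INT finite_greaterThanLessThan ballI open_lf)
  have cU: "convex (Uo s)" for s unfolding Uo_def by (intro convex_INT ballI convex_lf)
  have cH: "convex ?H" by (simp add: root_hyp_alt convex_hyperplane)
  have "card (closure ` components ?S) = card ?Pat"
  proof (rule card_closure_components_classify)
    show "finite ?Pat" by (simp add: finite_PiE)
    show "\<forall>x\<in>?S. ?cls x \<in> ?Pat" by simp
    show "\<forall>s\<in>?Pat. \<exists>x\<in>?S. ?cls x = s"
    proof
      fix s assume s: "s \<in> ?Pat"
      define x where "x = vecf \<sigma> n (\<lambda>m. if a < m \<and> m < b then (if s m then 1 else -1) else 0)"
      have xk: "x $ \<sigma> k = (if a < k \<and> k < b then (if s k then 1 else -1) else 0)" if "1 \<le> k" "k \<le> n" for k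
        using that by (simp add: x_def)
      have "x$\<sigma> a = x$\<sigma> b" using ab xk by simp
      moreover have "x$\<sigma> k \<noteq> x$\<sigma> a" if "k \<in> {a<..<b}" for k using that ab xk[of k] xk[of a] by simp
      ultimately have "x \<in> ?S" by (auto simp: ZA_def)
      moreover have "?cls x = s" unfolding restrict_eq_iff[OF s]
      proof
        fix k assume "k \<in> {a<..<b}"
        then show "(x$\<sigma> k > x$\<sigma> a) = s k" using ab xk[of k] xk[of a] by simp
      qed
      ultimately show "\<exists>x\<in>?S. ?cls x = s" by blast
    qed
    show "\<forall>s\<in>?Pat. convex {x\<in>?S. ?cls x = s}"
    proof
      fix s assume "s \<in> ?Pat"
      then have e: "{x\<in>?S. ?cls x = s} = ?H \<inter> Uo s" by (rule fib(2))
      have "convex (?H \<inter> Uo s)" using cH cU[of s] by (rule convex_Int)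
      then show "convex {x\<in>?S. ?cls x = s}" by (simp only: e)
    qed
    show "\<forall>s\<in>?Pat. \<exists>U. open U \<and> {x\<in>?S. ?cls x = s} = ?S \<inter> U"
    proof
      fix s assume "s \<in> ?Pat"
      then show "\<exists>U. open U \<and> {x\<in>?S. ?cls x = s} = ?S \<inter> U" using fib(1)[OF \<open>s \<in> ?Pat\<close>] oU[of s] by blast
    qed
  qed
  also have "card ?Pat = (\<Prod>k\<in>{a<..<b}. card (UNIV :: bool set))"
    by (rule card_PiE) simp
  also have "\<dots> = 2 ^ (b - a - 1)" by (simp add: card_UNIV_bool)
  finally show ?thesis unfolding sh .
qed

section \<open>Type H_{u,-v}\<close>

lemma sum_in': "eps \<sigma> i + eps \<sigma> j \<in> posroots_B \<sigma> n" if "1 \<le> i" "i \<le> n" "1 \<le> j" "j \<le> n" "i \<noteq> j"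
proof (cases "i < j")
  case True
  then have "eps \<sigma> j + eps \<sigma> i \<in> posroots_B \<sigma> n" using that by (intro sum_in) auto
  then show ?thesis by (simp add: add.commute)
next
  case False
  then show ?thesis using that by (intro sum_in) auto
qed

definition ZN :: "nat \<Rightarrow> nat \<Rightarrow> (real^'n) set" where
  "ZN u v = {x. x$\<sigma> u = - x$\<sigma> v \<and> (x$\<sigma> u = 0 \<or> (\<exists>k\<in>{1..<v}-{u}. x$\<sigma> k = x$\<sigma> v) \<or> (\<exists>k\<in>{1..<u}. x$\<sigma> k = x$\<sigma> u))}"

lemma cutN_sub:
  assumes uv: "1 \<le> u" "u < v" "v \<le> n"
  shows "\<Union>{root_hyp (eps \<sigma> v + eps \<sigma> u) \<inter> G | G. G \<in> cutting_set (arrangement (posroots_B \<sigma> n)) (base_region (posroots_B \<sigma> n)) (root_hyp (eps \<sigma> v + eps \<sigma> u))} \<subseteq> ZN u v"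
proof (rule cut_subset_B[OF sum_in[OF uv], where p = "vecf \<sigma> n (\<lambda>m. if m = u then - real v else if m = v then real v else real m)"])
  show "inner (vecf \<sigma> n (\<lambda>m. if m = u then - real v else if m = v then real v else real m)) (eps \<sigma> v + eps \<sigma> u) = 0" using uv by simp
  show "\<forall>\<gamma>\<in>posroots_B \<sigma> n. inner (vecf \<sigma> n (\<lambda>m. if m = u then - real v else if m = v then real v else real m)) \<gamma> > 0 \<or>
      root_hyp \<gamma> = root_hyp (eps \<sigma> v + eps \<sigma> u) \<or> root_hyp (eps \<sigma> v + eps \<sigma> u) \<inter> root_hyp \<gamma> \<subseteq> ZN u v"
    unfolding ball_PB
  proof (intro conjI allI impI)
    fix i j :: nat assume ij: "1 \<le> i" "i < j" "j \<le> n"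
    show "inner (vecf \<sigma> n (\<lambda>m. if m = u then - real v else if m = v then real v else real m)) (eps \<sigma> j - eps \<sigma> i) > 0 \<or>
      root_hyp (eps \<sigma> j - eps \<sigma> i) = root_hyp (eps \<sigma> v + eps \<sigma> u) \<or> root_hyp (eps \<sigma> v + eps \<sigma> u) \<inter> root_hyp (eps \<sigma> j - eps \<sigma> i) \<subseteq> ZN u v"
    proof (cases "j = u")
      case True then show ?thesis using ij uv by (auto simp: ZN_def)
    next
      case False then show ?thesis using ij uv by auto
    qed
    show "inner (vecf \<sigma> n (\<lambda>m. if m = u then - real v else if m = v then real v else real m)) (eps \<sigma> j + eps \<sigma> i) > 0 \<or>
      root_hyp (eps \<sigma> j + eps \<sigma> i) = root_hyp (eps \<sigma> v + eps \<sigma> u) \<or> root_hyp (eps \<sigma> v + eps \<sigma> u) \<inter> root_hyp (eps \<sigma> j + eps \<sigma> i) \<subseteq> ZN u v"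
    proof (cases "i = u")
      case True
      show ?thesis
      proof (cases "j = v")
        case True then show ?thesis using \<open>i = u\<close> by simp
      next
        case False
        show ?thesis
        proof (cases "j < v")
          case True then show ?thesis using \<open>i = u\<close> ij uv by (auto simp: ZN_def)
        next
          case False then show ?thesis using \<open>i = u\<close> \<open>j \<noteq> v\<close> ij uv by auto
        qed
      qed
    next
      case False
      show ?thesis
      proof (cases "j = u")
        case True then show ?thesis using \<open>i \<noteq> u\<close> ij uv by (auto simp: ZN_def)
      next
        case False then show ?thesis using \<open>i \<noteq> u\<close> ij uv by auto
      qed
    qed
  next
    fix i :: nat assume i: "1 \<le> i" "i \<le> n"
    show "inner (vecf \<sigma> n (\<lambda>m. if m = u then - real v else if m = v then real v else real m)) (eps \<sigma> i) > 0 \<or>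
      root_hyp (eps \<sigma> i) = root_hyp (eps \<sigma> v + eps \<sigma> u) \<or> root_hyp (eps \<sigma> v + eps \<sigma> u) \<inter> root_hyp (eps \<sigma> i) \<subseteq> ZN u v"
      using i uv by (auto simp: ZN_def)
  qed
qed

lemma cutN_sup_a:
  assumes uv: "1 \<le> u" "u < v" "v \<le> n" and k: "True"
  shows "root_hyp (eps \<sigma> v + eps \<sigma> u) \<inter> root_hyp (eps \<sigma> u) \<subseteq> \<Union>{root_hyp (eps \<sigma> v + eps \<sigma> u) \<inter> G | G. G \<in> cutting_set (arrangement (posroots_B \<sigma> n)) (base_region (posroots_B \<sigma> n)) (root_hyp (eps \<sigma> v + eps \<sigma> u))}"
proof (rule cut_supset_B[OF sum_in[OF uv] eps_in _ diff_in eps_in, where a=1 and c=2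
        and q = "vecf \<sigma> n (\<lambda>m. if m = u \<or> m = v then 0 else real m)" and p = "vecf \<sigma> n (\<lambda>m. if m = v then 1 else 0)"])
    show "root_hyp (eps \<sigma> u) \<noteq> root_hyp (eps \<sigma> v + eps \<sigma> u)"
    proof
      assume "root_hyp (eps \<sigma> u) = root_hyp (eps \<sigma> v + eps \<sigma> u)"
      moreover have "vecf \<sigma> n (\<lambda>m. if m = u then 0 else 1) \<in> root_hyp (eps \<sigma> u)" using k uv by simp
      ultimately have "vecf \<sigma> n (\<lambda>m. if m = u then 0 else 1) \<in> root_hyp (eps \<sigma> v + eps \<sigma> u)" by simp
      then show False using k uv by simp
    qed

    show "root_hyp (eps \<sigma> v - eps \<sigma> u) \<noteq> root_hyp (eps \<sigma> u)"
    proof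
      assume "root_hyp (eps \<sigma> v - eps \<sigma> u) = root_hyp (eps \<sigma> u)"
      moreover have "vecf \<sigma> n (\<lambda>m. 1) \<in> root_hyp (eps \<sigma> v - eps \<sigma> u)" using k uv by simp
      ultimately have "vecf \<sigma> n (\<lambda>m. 1) \<in> root_hyp (eps \<sigma> u)" by simp
      then show False using k uv by simp
    qed

    show "\<forall>\<gamma>\<in>posroots_B \<sigma> n. inner (vecf \<sigma> n (\<lambda>m. if m = u \<or> m = v then 0 else real m)) \<gamma> \<noteq> 0 \<or>
        inner (vecf \<sigma> n (\<lambda>m. if m = v then 1 else 0)) \<gamma> > 0 \<or> \<gamma> = eps \<sigma> u"
      unfolding ball_PB
    proof (intro conjI allI impI)
      fix i j :: nat assume ij: "1 \<le> i" "i < j" "j \<le> n"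
      show "inner (vecf \<sigma> n (\<lambda>m. if m = u \<or> m = v then 0 else real m)) (eps \<sigma> j - eps \<sigma> i) \<noteq> 0 \<or>
        inner (vecf \<sigma> n (\<lambda>m. if m = v then 1 else 0)) (eps \<sigma> j - eps \<sigma> i) > 0 \<or> eps \<sigma> j - eps \<sigma> i = eps \<sigma> u"
        using ij k uv by auto
      show "inner (vecf \<sigma> n (\<lambda>m. if m = u \<or> m = v then 0 else real m)) (eps \<sigma> j + eps \<sigma> i) \<noteq> 0 \<or>
        inner (vecf \<sigma> n (\<lambda>m. if m = v then 1 else 0)) (eps \<sigma> j + eps \<sigma> i) > 0 \<or> eps \<sigma> j + eps \<sigma> i = eps \<sigma> u"
        using ij k uv by auto
    next
      fix i :: nat assume i: "1 \<le> i" "i \<le> n"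
      show "inner (vecf \<sigma> n (\<lambda>m. if m = u \<or> m = v then 0 else real m)) (eps \<sigma> i) \<noteq> 0 \<or>
        inner (vecf \<sigma> n (\<lambda>m. if m = v then 1 else 0)) (eps \<sigma> i) > 0 \<or> eps \<sigma> i = eps \<sigma> u"
        using i k uv by auto
    qed

    show "eps \<sigma> v + eps \<sigma> u = 1 *\<^sub>R (eps \<sigma> v - eps \<sigma> u) + 2 *\<^sub>R (eps \<sigma> u)" by (simp add: algebra_simps scaleR_2)
    show "root_hyp (eps \<sigma> v + eps \<sigma> u) \<inter> root_hyp (eps \<sigma> u) \<subseteq> root_hyp (eps \<sigma> v - eps \<sigma> u)" by auto
    show "root_hyp (eps \<sigma> v + eps \<sigma> u) \<inter> root_hyp (eps \<sigma> u) \<subseteq> root_hyp (eps \<sigma> u)" by auto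
    show "vecf \<sigma> n (\<lambda>m. if m = u \<or> m = v then 0 else real m) \<in> root_hyp (eps \<sigma> v + eps \<sigma> u) \<inter> root_hyp (eps \<sigma> u)" using uv k by simp
    show "inner (vecf \<sigma> n (\<lambda>m. if m = v then 1 else 0)) (eps \<sigma> u) = 0" using uv k by simp
qed (use uv k in simp_all)

lemma cutN_sup_b:
  assumes uv: "1 \<le> u" "u < v" "v \<le> n" and k: "1 \<le> k" "k < v" "k \<noteq> u"
  shows "root_hyp (eps \<sigma> v + eps \<sigma> u) \<inter> root_hyp (eps \<sigma> v - eps \<sigma> k) \<subseteq> \<Union>{root_hyp (eps \<sigma> v + eps \<sigma> u) \<inter> G | G. G \<in> cutting_set (arrangement (posroots_B \<sigma> n)) (base_region (posroots_B \<sigma> n)) (root_hyp (eps \<sigma> v + eps \<sigma> u))}"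
proof (rule cut_supset_B[OF sum_in[OF uv] diff_in _ diff_in sum_in', where a=1 and c=1
        and q = "vecf \<sigma> n (\<lambda>m. if m = k \<or> m = v then real n + 1 else if m = u then - (real n + 1) else real m)" and p = "vecf \<sigma> n (\<lambda>m. if m = u then 1 else 0)"])
    show "root_hyp (eps \<sigma> v - eps \<sigma> k) \<noteq> root_hyp (eps \<sigma> v + eps \<sigma> u)"
    proof
      assume "root_hyp (eps \<sigma> v - eps \<sigma> k) = root_hyp (eps \<sigma> v + eps \<sigma> u)"
      moreover have "vecf \<sigma> n (\<lambda>m. 1) \<in> root_hyp (eps \<sigma> v - eps \<sigma> k)" using k uv by simp
      ultimately have "vecf \<sigma> n (\<lambda>m. 1) \<in> root_hyp (eps \<sigma> v + eps \<sigma> u)" by simp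
      then show False using k uv by simp
    qed

    show "root_hyp (eps \<sigma> v - eps \<sigma> k) \<noteq> root_hyp (eps \<sigma> u + eps \<sigma> k)"
    proof
      assume "root_hyp (eps \<sigma> v - eps \<sigma> k) = root_hyp (eps \<sigma> u + eps \<sigma> k)"
      moreover have "vecf \<sigma> n (\<lambda>m. 1) \<in> root_hyp (eps \<sigma> v - eps \<sigma> k)" using k uv by simp
      ultimately have "vecf \<sigma> n (\<lambda>m. 1) \<in> root_hyp (eps \<sigma> u + eps \<sigma> k)" by simp
      then show False using k uv by simp
    qed

    show "\<forall>\<gamma>\<in>posroots_B \<sigma> n. inner (vecf \<sigma> n (\<lambda>m. if m = k \<or> m = v then real n + 1 else if m = u then - (real n + 1) else real m)) \<gamma> \<noteq> 0 \<or>
        inner (vecf \<sigma> n (\<lambda>m. if m = u then 1 else 0)) \<gamma> > 0 \<or> \<gamma> = eps \<sigma> v - eps \<sigma> k"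
      unfolding ball_PB
    proof (intro conjI allI impI)
      fix i j :: nat assume ij: "1 \<le> i" "i < j" "j \<le> n"
      show "inner (vecf \<sigma> n (\<lambda>m. if m = k \<or> m = v then real n + 1 else if m = u then - (real n + 1) else real m)) (eps \<sigma> j - eps \<sigma> i) \<noteq> 0 \<or>
        inner (vecf \<sigma> n (\<lambda>m. if m = u then 1 else 0)) (eps \<sigma> j - eps \<sigma> i) > 0 \<or> eps \<sigma> j - eps \<sigma> i = eps \<sigma> v - eps \<sigma> k"
        using ij k uv by auto
      show "inner (vecf \<sigma> n (\<lambda>m. if m = k \<or> m = v then real n + 1 else if m = u then - (real n + 1) else real m)) (eps \<sigma> j + eps \<sigma> i) \<noteq> 0 \<or>
        inner (vecf \<sigma> n (\<lambda>m. if m = u then 1 else 0)) (eps \<sigma> j + eps \<sigma> i) > 0 \<or> eps \<sigma> j + eps \<sigma> i = eps \<sigma> v - eps \<sigma> k"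
        using ij k uv by auto
    next
      fix i :: nat assume i: "1 \<le> i" "i \<le> n"
      show "inner (vecf \<sigma> n (\<lambda>m. if m = k \<or> m = v then real n + 1 else if m = u then - (real n + 1) else real m)) (eps \<sigma> i) \<noteq> 0 \<or>
        inner (vecf \<sigma> n (\<lambda>m. if m = u then 1 else 0)) (eps \<sigma> i) > 0 \<or> eps \<sigma> i = eps \<sigma> v - eps \<sigma> k"
        using i k uv by auto
    qed

    show "eps \<sigma> v + eps \<sigma> u = 1 *\<^sub>R (eps \<sigma> v - eps \<sigma> k) + 1 *\<^sub>R (eps \<sigma> u + eps \<sigma> k)" by (simp add: algebra_simps)
    show "root_hyp (eps \<sigma> v + eps \<sigma> u) \<inter> root_hyp (eps \<sigma> v - eps \<sigma> k) \<subseteq> root_hyp (eps \<sigma> v - eps \<sigma> k)" by auto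
    show "root_hyp (eps \<sigma> v + eps \<sigma> u) \<inter> root_hyp (eps \<sigma> v - eps \<sigma> k) \<subseteq> root_hyp (eps \<sigma> u + eps \<sigma> k)" by auto
    show "vecf \<sigma> n (\<lambda>m. if m = k \<or> m = v then real n + 1 else if m = u then - (real n + 1) else real m) \<in> root_hyp (eps \<sigma> v + eps \<sigma> u) \<inter> root_hyp (eps \<sigma> v - eps \<sigma> k)" using uv k by simp
    show "inner (vecf \<sigma> n (\<lambda>m. if m = u then 1 else 0)) (eps \<sigma> v - eps \<sigma> k) = 0" using uv k by simp
qed (use uv k in simp_all)

lemma cutN_sup_c:
  assumes uv: "1 \<le> u" "u < v" "v \<le> n" and k: "1 \<le> k" "k < u"
  shows "root_hyp (eps \<sigma> v + eps \<sigma> u) \<inter> root_hyp (eps \<sigma> u - eps \<sigma> k) \<subseteq> \<Union>{root_hyp (eps \<sigma> v + eps \<sigma> u) \<inter> G | G. G \<in> cutting_set (arrangement (posroots_B \<sigma> n)) (base_region (posroots_B \<sigma> n)) (root_hyp (eps \<sigma> v + eps \<sigma> u))}"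
proof (rule cut_supset_B[OF sum_in[OF uv] diff_in _ diff_in sum_in, where a=1 and c=1
        and q = "vecf \<sigma> n (\<lambda>m. if m = k \<or> m = u then real n + 1 else if m = v then - (real n + 1) else real m)" and p = "vecf \<sigma> n (\<lambda>m. if m = v then 1 else 0)"])
    show "root_hyp (eps \<sigma> u - eps \<sigma> k) \<noteq> root_hyp (eps \<sigma> v + eps \<sigma> u)"
    proof
      assume "root_hyp (eps \<sigma> u - eps \<sigma> k) = root_hyp (eps \<sigma> v + eps \<sigma> u)"
      moreover have "vecf \<sigma> n (\<lambda>m. 1) \<in> root_hyp (eps \<sigma> u - eps \<sigma> k)" using k uv by simp
      ultimately have "vecf \<sigma> n (\<lambda>m. 1) \<in> root_hyp (eps \<sigma> v + eps \<sigma> u)" by simp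
      then show False using k uv by simp
    qed

    show "root_hyp (eps \<sigma> u - eps \<sigma> k) \<noteq> root_hyp (eps \<sigma> v + eps \<sigma> k)"
    proof
      assume "root_hyp (eps \<sigma> u - eps \<sigma> k) = root_hyp (eps \<sigma> v + eps \<sigma> k)"
      moreover have "vecf \<sigma> n (\<lambda>m. 1) \<in> root_hyp (eps \<sigma> u - eps \<sigma> k)" using k uv by simp
      ultimately have "vecf \<sigma> n (\<lambda>m. 1) \<in> root_hyp (eps \<sigma> v + eps \<sigma> k)" by simp
      then show False using k uv by simp
    qed

    show "\<forall>\<gamma>\<in>posroots_B \<sigma> n. inner (vecf \<sigma> n (\<lambda>m. if m = k \<or> m = u then real n + 1 else if m = v then - (real n + 1) else real m)) \<gamma> \<noteq> 0 \<or>
        inner (vecf \<sigma> n (\<lambda>m. if m = v then 1 else 0)) \<gamma> > 0 \<or> \<gamma> = eps \<sigma> u - eps \<sigma> k"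
      unfolding ball_PB
    proof (intro conjI allI impI)
      fix i j :: nat assume ij: "1 \<le> i" "i < j" "j \<le> n"
      show "inner (vecf \<sigma> n (\<lambda>m. if m = k \<or> m = u then real n + 1 else if m = v then - (real n + 1) else real m)) (eps \<sigma> j - eps \<sigma> i) \<noteq> 0 \<or>
        inner (vecf \<sigma> n (\<lambda>m. if m = v then 1 else 0)) (eps \<sigma> j - eps \<sigma> i) > 0 \<or> eps \<sigma> j - eps \<sigma> i = eps \<sigma> u - eps \<sigma> k"
        using ij k uv by auto
      show "inner (vecf \<sigma> n (\<lambda>m. if m = k \<or> m = u then real n + 1 else if m = v then - (real n + 1) else real m)) (eps \<sigma> j + eps \<sigma> i) \<noteq> 0 \<or>
        inner (vecf \<sigma> n (\<lambda>m. if m = v then 1 else 0)) (eps \<sigma> j + eps \<sigma> i) > 0 \<or> eps \<sigma> j + eps \<sigma> i = eps \<sigma> u - eps \<sigma> k"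
        using ij k uv by auto
    next
      fix i :: nat assume i: "1 \<le> i" "i \<le> n"
      show "inner (vecf \<sigma> n (\<lambda>m. if m = k \<or> m = u then real n + 1 else if m = v then - (real n + 1) else real m)) (eps \<sigma> i) \<noteq> 0 \<or>
        inner (vecf \<sigma> n (\<lambda>m. if m = v then 1 else 0)) (eps \<sigma> i) > 0 \<or> eps \<sigma> i = eps \<sigma> u - eps \<sigma> k"
        using i k uv by auto
    qed

    show "eps \<sigma> v + eps \<sigma> u = 1 *\<^sub>R (eps \<sigma> u - eps \<sigma> k) + 1 *\<^sub>R (eps \<sigma> v + eps \<sigma> k)" by (simp add: algebra_simps)
    show "root_hyp (eps \<sigma> v + eps \<sigma> u) \<inter> root_hyp (eps \<sigma> u - eps \<sigma> k) \<subseteq> root_hyp (eps \<sigma> u - eps \<sigma> k)" by auto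
    show "root_hyp (eps \<sigma> v + eps \<sigma> u) \<inter> root_hyp (eps \<sigma> u - eps \<sigma> k) \<subseteq> root_hyp (eps \<sigma> v + eps \<sigma> k)" by auto
    show "vecf \<sigma> n (\<lambda>m. if m = k \<or> m = u then real n + 1 else if m = v then - (real n + 1) else real m) \<in> root_hyp (eps \<sigma> v + eps \<sigma> u) \<inter> root_hyp (eps \<sigma> u - eps \<sigma> k)" using uv k by simp
    show "inner (vecf \<sigma> n (\<lambda>m. if m = v then 1 else 0)) (eps \<sigma> u - eps \<sigma> k) = 0" using uv k by simp
qed (use uv k in simp_all)

lemma cutN_sup:
  assumes uv: "1 \<le> u" "u < v" "v \<le> n"
  shows "ZN u v \<subseteq> \<Union>{root_hyp (eps \<sigma> v + eps \<sigma> u) \<inter> G | G. G \<in> cutting_set (arrangement (posroots_B \<sigma> n)) (base_region (posroots_B \<sigma> n)) (root_hyp (eps \<sigma> v + eps \<sigma> u))}"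
proof
  fix x assume x: "x \<in> ZN u v"
  then have H: "x \<in> root_hyp (eps \<sigma> v + eps \<sigma> u)" by (simp add: ZN_def)
  consider (a) "x$\<sigma> u = 0" | (b) k where "k \<in> {1..<v}-{u}" "x$\<sigma> k = x$\<sigma> v"
    | (c) k where "k \<in> {1..<u}" "x$\<sigma> k = x$\<sigma> u" using x unfolding ZN_def by blast
  then show "x \<in> \<Union>{root_hyp (eps \<sigma> v + eps \<sigma> u) \<inter> G | G. G \<in> cutting_set (arrangement (posroots_B \<sigma> n)) (base_region (posroots_B \<sigma> n)) (root_hyp (eps \<sigma> v + eps \<sigma> u))}"
  proof cases
    case a
    then have "x \<in> root_hyp (eps \<sigma> v + eps \<sigma> u) \<inter> root_hyp (eps \<sigma> u)" using H by simp
    then show ?thesis using cutN_sup_a[OF uv] by blast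
  next
    case (b k)
    then have "x \<in> root_hyp (eps \<sigma> v + eps \<sigma> u) \<inter> root_hyp (eps \<sigma> v - eps \<sigma> k)" using H by simp
    moreover have "root_hyp (eps \<sigma> v + eps \<sigma> u) \<inter> root_hyp (eps \<sigma> v - eps \<sigma> k) \<subseteq> \<Union>{root_hyp (eps \<sigma> v + eps \<sigma> u) \<inter> G | G. G \<in> cutting_set (arrangement (posroots_B \<sigma> n)) (base_region (posroots_B \<sigma> n)) (root_hyp (eps \<sigma> v + eps \<sigma> u))}"
      by (rule cutN_sup_b[OF uv]) (use b in auto)
    ultimately show ?thesis by blast
  next
    case (c k)
    then have "x \<in> root_hyp (eps \<sigma> v + eps \<sigma> u) \<inter> root_hyp (eps \<sigma> u - eps \<sigma> k)" using H by simp
    moreover have "root_hyp (eps \<sigma> v + eps \<sigma> u) \<inter> root_hyp (eps \<sigma> u - eps \<sigma> k) \<subseteq> \<Union>{root_hyp (eps \<sigma> v + eps \<sigma> u) \<inter> G | G. G \<in> cutting_set (arrangement (posroots_B \<sigma> n)) (base_region (posroots_B \<sigma> n)) (root_hyp (eps \<sigma> v + eps \<sigma> u))}"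
      by (rule cutN_sup_c[OF uv]) (use c in auto)
    ultimately show ?thesis by blast
  qed
qed

lemma shardsN:
  assumes uv: "1 \<le> u" "u < v" "v \<le> n"
  shows "card (shards_of (arrangement (posroots_B \<sigma> n)) (base_region (posroots_B \<sigma> n)) (root_hyp (eps \<sigma> v + eps \<sigma> u))) = 2 ^ (v - u) * 3 ^ (u - 1)"
proof -
  let ?H = "root_hyp (eps \<sigma> v + eps \<sigma> u)"
  let ?S = "?H - ZN u v"
  have U: "\<Union>{root_hyp (eps \<sigma> v + eps \<sigma> u) \<inter> G | G. G \<in> cutting_set (arrangement (posroots_B \<sigma> n)) (base_region (posroots_B \<sigma> n)) (root_hyp (eps \<sigma> v + eps \<sigma> u))} = ZN u v"
    using cutN_sub[OF uv] cutN_sup[OF uv] by (rule antisym)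
  have sh: "shards_of (arrangement (posroots_B \<sigma> n)) (base_region (posroots_B \<sigma> n)) ?H = closure ` components ?S"
    unfolding shards_of_def U by simp
  let ?Pat = "(UNIV :: bool set) \<times> PiE {u<..<v} (\<lambda>_. UNIV :: bool set) \<times> PiE {1..<u} (\<lambda>_. {0,1,2::nat})"
  define cd where "cd x k = (if x$\<sigma> k > x$\<sigma> u then 1 else 0) + (if x$\<sigma> k > x$\<sigma> v then 1 else (0::nat))" for x :: "real^'n" and k
  define cls where "cls x = (x$\<sigma> u > 0, restrict (\<lambda>k. x$\<sigma> k > x$\<sigma> v) {u<..<v}, restrict (cd x) {1..<u})" for x :: "real^'n"
  define ep where "ep e = (if e then 1 else - 1 :: real)" for e
  define a1 where "a1 e c = (if c = (0::nat) then 1 else if c = 2 then -1 else ep e)" for e c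
  define b1 where "b1 e c = (if c = (0::nat) then 1 else if c = 2 then -1 else - ep e)" for e c
  define Uo where "Uo e s c = {x. lf (ep e) (\<sigma> u) 0 (\<sigma> u) x > 0} \<inter>
     (\<Inter>k\<in>{u<..<v}. {x. lf (ep (s k)) (\<sigma> k) (- ep (s k)) (\<sigma> v) x > 0}) \<inter>
     (\<Inter>k\<in>{1..<u}. {x. lf (a1 e (c k)) (\<sigma> u) (- a1 e (c k)) (\<sigma> k) x > 0} \<inter> {x. lf (b1 e (c k)) (\<sigma> v) (- b1 e (c k)) (\<sigma> k) x > 0})"
    for e s c
  have Uo_iff: "x \<in> Uo e s c \<longleftrightarrow> ep e * x$\<sigma> u > 0 \<and> (\<forall>k\<in>{u<..<v}. ep (s k) * (x$\<sigma> k - x$\<sigma> v) > 0)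
      \<and> (\<forall>k\<in>{1..<u}. a1 e (c k) * (x$\<sigma> u - x$\<sigma> k) > 0 \<and> b1 e (c k) * (x$\<sigma> v - x$\<sigma> k) > 0)" for x e s c
    by (simp add: Uo_def lf_def algebra_simps)
  have ep_pos: "ep e * y > 0 \<longleftrightarrow> (if e then y > 0 else y < 0)" for e y
    by (auto simp: ep_def)
  have oU: "open (Uo e s c)" for e s c unfolding Uo_def
    by (intro open_Int open_INT finite_greaterThanLessThan finite_atLeastLessThan ballI open_lf)
  have cU: "convex (Uo e s c)" for e s c unfolding Uo_def by (intro convex_Int convex_INT ballI convex_lf)
  have cH: "convex ?H" by (simp add: root_hyp_alt convex_hyperplane)
  have Sx: "x \<in> ?S \<longleftrightarrow> x$\<sigma> u = - x$\<sigma> v \<and> x$\<sigma> u \<noteq> 0 \<and> (\<forall>k\<in>{1..<v}-{u}. x$\<sigma> k \<noteq> x$\<sigma> v) \<and> (\<forall>k\<in>{1..<u}. x$\<sigma> k \<noteq> x$\<sigma> u)" for x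
    by (auto simp: ZN_def)
  have fib: "{x\<in>?S. cls x = (e,s,c)} = ?S \<inter> Uo e s c" "{x\<in>?S. cls x = (e,s,c)} = ?H \<inter> Uo e s c"
    if t: "(e,s,c) \<in> ?Pat" for e s c
  proof -
    have s: "s \<in> PiE {u<..<v} (\<lambda>_. UNIV :: bool set)" and c: "c \<in> PiE {1..<u} (\<lambda>_. {0,1,2::nat})" using t by auto
    have "(cls x = (e,s,c)) \<longleftrightarrow> x \<in> Uo e s c" if x: "x \<in> ?S" for x
    proof -
      have xs: "x$\<sigma> u = - x$\<sigma> v" "x$\<sigma> u \<noteq> 0" "\<forall>k\<in>{1..<v}-{u}. x$\<sigma> k \<noteq> x$\<sigma> v" "\<forall>k\<in>{1..<u}. x$\<sigma> k \<noteq> x$\<sigma> u"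
        using x unfolding Sx by auto
      have "(cls x = (e,s,c)) \<longleftrightarrow> (x$\<sigma> u > 0) = e \<and> (\<forall>k\<in>{u<..<v}. (x$\<sigma> k > x$\<sigma> v) = s k) \<and> (\<forall>k\<in>{1..<u}. cd x k = c k)"
        unfolding cls_def using restrict_eq_iff[OF s] restrict_eq_iff[OF c] by simp
      also have "\<dots> \<longleftrightarrow> x \<in> Uo e s c"
      proof (cases "(x$\<sigma> u > 0) = e")
        case False
        then have "\<not> ep e * x$\<sigma> u > 0" using xs(2) unfolding ep_pos by auto
        then show ?thesis using False unfolding Uo_iff by simp
      next
        case True
        have e1: "ep e * x$\<sigma> u > 0" using True xs(2) unfolding ep_pos by auto
        have A: "(\<forall>k\<in>{u<..<v}. (x$\<sigma> k > x$\<sigma> v) = s k) \<longleftrightarrow> (\<forall>k\<in>{u<..<v}. ep (s k) * (x$\<sigma> k - x$\<sigma> v) > 0)"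
        proof (intro ball_cong refl)
          fix k assume "k \<in> {u<..<v}"
          then have "x$\<sigma> k \<noteq> x$\<sigma> v" using xs(3) uv by auto
          then show "((x$\<sigma> k > x$\<sigma> v) = s k) = (ep (s k) * (x$\<sigma> k - x$\<sigma> v) > 0)" unfolding ep_pos by auto
        qed
        have B: "(\<forall>k\<in>{1..<u}. cd x k = c k) \<longleftrightarrow> (\<forall>k\<in>{1..<u}. a1 e (c k) * (x$\<sigma> u - x$\<sigma> k) > 0 \<and> b1 e (c k) * (x$\<sigma> v - x$\<sigma> k) > 0)"
        proof (intro ball_cong refl)
          fix k assume k: "k \<in> {1..<u}"
          then have "x$\<sigma> k \<noteq> x$\<sigma> v" "x$\<sigma> k \<noteq> x$\<sigma> u" using xs(3,4) uv by auto
          moreover have "c k \<in> {0,1,2}" using PiE_mem[OF c k] by simp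
          moreover have "ep e = (if x$\<sigma> u > 0 then 1 else -1)" using True by (auto simp: ep_def)
          ultimately show "(cd x k = c k) = (a1 e (c k) * (x$\<sigma> u - x$\<sigma> k) > 0 \<and> b1 e (c k) * (x$\<sigma> v - x$\<sigma> k) > 0)"
            unfolding cd_def a1_def b1_def using code3[of "x$\<sigma> v" "x$\<sigma> u" "x$\<sigma> k" "c k"] xs(1,2) by simp
        qed
        show ?thesis using True e1 A B unfolding Uo_iff by simp
      qed
      finally show ?thesis .
    qed
    then show "{x\<in>?S. cls x = (e,s,c)} = ?S \<inter> Uo e s c" by blast
    moreover have "?H \<inter> Uo e s c \<subseteq> ?S"
    proof
      fix x assume x: "x \<in> ?H \<inter> Uo e s c"
      then have hx: "x$\<sigma> u = - x$\<sigma> v" by simp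
      have U: "ep e * x$\<sigma> u > 0" "\<forall>k\<in>{u<..<v}. ep (s k) * (x$\<sigma> k - x$\<sigma> v) > 0"
        "\<forall>k\<in>{1..<u}. a1 e (c k) * (x$\<sigma> u - x$\<sigma> k) > 0 \<and> b1 e (c k) * (x$\<sigma> v - x$\<sigma> k) > 0"
        using Uo_iff[THEN iffD1, of x e s c] x by auto
      have "x$\<sigma> u \<noteq> 0" using U(1) by auto
      moreover have "x$\<sigma> k \<noteq> x$\<sigma> v" if "k \<in> {1..<v}-{u}" for k
      proof (cases "k < u")
        case True
        then have "k \<in> {1..<u}" using that by auto
        then have "b1 e (c k) * (x$\<sigma> v - x$\<sigma> k) > 0" using U(3) by blast
        then show ?thesis by auto
      next
        case False then have "k \<in> {u<..<v}" using that by auto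
        then have "ep (s k) * (x$\<sigma> k - x$\<sigma> v) > 0" using U(2) by blast
        then show ?thesis by auto
      qed
      moreover have "x$\<sigma> k \<noteq> x$\<sigma> u" if "k \<in> {1..<u}" for k
      proof -
        have "a1 e (c k) * (x$\<sigma> u - x$\<sigma> k) > 0" using U(3) that by blast
        then show ?thesis by auto
      qed
      ultimately show "x \<in> ?S" unfolding Sx using hx by blast
    qed
    ultimately show "{x\<in>?S. cls x = (e,s,c)} = ?H \<inter> Uo e s c" by blast
  qed
  have "card (closure ` components ?S) = card ?Pat"
  proof (rule card_closure_components_classify)
    show "finite ?Pat" by (simp add: finite_PiE)
    show "\<forall>x\<in>?S. cls x \<in> ?Pat" by (auto simp: cls_def cd_def)
    show "\<forall>t\<in>?Pat. \<exists>x\<in>?S. cls x = t"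
    proof
      fix t assume t: "t \<in> ?Pat"
      obtain e s c where esc: "t = (e,s,c)" by (cases t) auto
      have s: "s \<in> PiE {u<..<v} (\<lambda>_. UNIV :: bool set)" and c: "c \<in> PiE {1..<u} (\<lambda>_. {0,1,2::nat})" using t esc by auto
      define x where "x = vecf \<sigma> n (\<lambda>m. if m = u then ep e else if m = v then - ep e
          else if u < m \<and> m < v then - ep e + ep (s m) else if m < u then (if c m = 0 then -2 else if c m = 2 then 2 else 0) else 0)"
      have xk: "x $ \<sigma> k = (if k = u then ep e else if k = v then - ep e
          else if u < k \<and> k < v then - ep e + ep (s k) else if k < u then (if c k = 0 then -2 else if c k = 2 then 2 else 0) else 0)"
        if "1 \<le> k" "k \<le> n" for k
        using that by (simp add: x_def)
      have xu: "x$\<sigma> u = ep e" "x$\<sigma> v = - ep e" using xk[of u] xk[of v] uv by auto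
      have c3: "c k \<in> {0,1,2}" if "k \<in> {1..<u}" for k using PiE_mem[OF c that] by simp
      have "x \<in> ?S" unfolding Sx
      proof (intro conjI ballI)
        show "x$\<sigma> u = - x$\<sigma> v" "x$\<sigma> u \<noteq> 0" using xu by (auto simp: ep_def)
        fix k assume k: "k \<in> {1..<v}-{u}"
        show "x$\<sigma> k \<noteq> x$\<sigma> v"
        proof (cases "k < u")
          case True then show ?thesis using xk[of k] xu k uv c3[of k] by (auto simp: ep_def)
        next
          case False then show ?thesis using xk[of k] xu k uv by (auto simp: ep_def)
        qed
      next
        fix k assume k: "k \<in> {1..<u}"
        show "x$\<sigma> k \<noteq> x$\<sigma> u" using xk[of k] xu k uv c3[of k] by (auto simp: ep_def)
      qed
      moreover have "cls x = (e,s,c)"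
      proof -
        have "(x$\<sigma> u > 0) = e" using xu by (auto simp: ep_def)
        moreover have "restrict (\<lambda>k. x$\<sigma> k > x$\<sigma> v) {u<..<v} = s" unfolding restrict_eq_iff[OF s]
        proof
          fix k assume k: "k \<in> {u<..<v}"
          then show "(x$\<sigma> k > x$\<sigma> v) = s k" using xk[of k] xu uv by (auto simp: ep_def)
        qed
        moreover have "restrict (cd x) {1..<u} = c" unfolding restrict_eq_iff[OF c]
        proof
          fix k assume k: "k \<in> {1..<u}"
          then show "cd x k = c k" using xk[of k] xu uv c3[of k] by (auto simp: ep_def cd_def)
        qed
        ultimately show ?thesis by (simp add: cls_def)
      qed
      ultimately show "\<exists>x\<in>?S. cls x = t" using esc by blast
    qed
    show "\<forall>t\<in>?Pat. convex {x\<in>?S. cls x = t}"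
    proof
      fix t assume t: "t \<in> ?Pat"
      obtain e s c where esc: "t = (e,s,c)" by (cases t) auto
      have "(e,s,c) \<in> ?Pat" using t esc by simp
      then have "{x\<in>?S. cls x = (e,s,c)} = ?H \<inter> Uo e s c" by (rule fib(2))
      then have e: "{x\<in>?S. cls x = t} = ?H \<inter> Uo e s c" using esc by simp
      have "convex (?H \<inter> Uo e s c)" using cH cU[of e s c] by (rule convex_Int)
      then show "convex {x\<in>?S. cls x = t}" by (simp only: e)
    qed
    show "\<forall>t\<in>?Pat. \<exists>U. open U \<and> {x\<in>?S. cls x = t} = ?S \<inter> U"
    proof
      fix t assume t: "t \<in> ?Pat"
      obtain e s c where esc: "t = (e,s,c)" by (cases t) auto
      have "(e,s,c) \<in> ?Pat" using t esc by simp
      then have "{x\<in>?S. cls x = (e,s,c)} = ?S \<inter> Uo e s c" by (rule fib(1))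
      then show "\<exists>U. open U \<and> {x\<in>?S. cls x = t} = ?S \<inter> U" using esc oU[of e s c] by blast
    qed
  qed
  also have "card ?Pat = 2 * (2 ^ (v - u - 1) * 3 ^ (u - 1))"
  proof -
    have "card (PiE {u<..<v} (\<lambda>_. UNIV :: bool set)) = (\<Prod>k\<in>{u<..<v}. card (UNIV :: bool set))"
      by (rule card_PiE) simp
    also have "\<dots> = 2 ^ (v - u - 1)" by (simp add: card_UNIV_bool)
    finally have c1: "card (PiE {u<..<v} (\<lambda>_. UNIV :: bool set)) = 2 ^ (v - u - 1)" .
    have "card (PiE {1..<u} (\<lambda>_. {0,1,2::nat})) = (\<Prod>k\<in>{1..<u}. card {0,1,2::nat})"
      by (rule card_PiE) simp
    also have "\<dots> = 3 ^ (u - 1)" by (simp add: numeral_3_eq_3)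
    finally have c2: "card (PiE {1..<u} (\<lambda>_. {0,1,2::nat})) = 3 ^ (u - 1)" .
    show ?thesis by (simp only: card_cartesian_product c1 c2 card_UNIV_bool)
  qed
  also have "\<dots> = 2 ^ (v - u) * 3 ^ (u - 1)"
  proof -
    have "v - u = Suc (v - u - 1)" using uv by simp
    then have "(2::nat) ^ (v - u) = 2 * 2 ^ (v - u - 1)" by (metis power_Suc)
    then show ?thesis by (simp only: mult.assoc)
  qed
  finally show ?thesis unfolding sh .
qed

end



lemma S1_eq: "(\<Sum>i\<in>{0..<j}. (2::nat) ^ (j - i - 1)) + 1 = 2 ^ j"
proof (induction j)
  case 0 then show ?case by simp
next
  case (Suc j)
  have "(\<Sum>i\<in>{0..<Suc j}. (2::nat) ^ (Suc j - i - 1)) = (\<Sum>i\<in>{0..<j}. 2 ^ (Suc j - i - 1)) + 1"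
    by (simp add: sum.atLeast0_lessThan_Suc)
  also have "(\<Sum>i\<in>{0..<j}. (2::nat) ^ (Suc j - i - 1)) = (\<Sum>i\<in>{0..<j}. 2 * 2 ^ (j - i - 1))"
  proof (rule sum.cong[OF refl])
    fix i assume "i \<in> {0..<j}"
    then have "Suc j - i - 1 = Suc (j - i - 1)" by auto
    then show "(2::nat) ^ (Suc j - i - 1) = 2 * 2 ^ (j - i - 1)" by simp
  qed
  also have "\<dots> = 2 * (\<Sum>i\<in>{0..<j}. 2 ^ (j - i - 1))" by (simp add: sum_distrib_left)
  finally show ?case using Suc.IH by simp
qed

lemma S2_eq: "j \<ge> 1 \<Longrightarrow> (\<Sum>i\<in>{1..<j}. (2::nat) ^ (j - i) * 3 ^ (i - 1)) + 2 ^ j = 2 * 3 ^ (j - 1)"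
proof (induction j rule: nat_induct_at_least)
  case base then show ?case by simp
next
  case (Suc j)
  have "(\<Sum>i\<in>{1..<Suc j}. (2::nat) ^ (Suc j - i) * 3 ^ (i - 1)) = (\<Sum>i\<in>{1..<j}. 2 ^ (Suc j - i) * 3 ^ (i - 1)) + 2 * 3 ^ (j - 1)"
    using Suc.hyps by (simp add: sum.atLeastLessThan_Suc)
  also have "(\<Sum>i\<in>{1..<j}. (2::nat) ^ (Suc j - i) * 3 ^ (i - 1)) = (\<Sum>i\<in>{1..<j}. 2 * (2 ^ (j - i) * 3 ^ (i - 1)))"
  proof (rule sum.cong[OF refl])
    fix i assume "i \<in> {1..<j}"
    then have "Suc j - i = Suc (j - i)" by auto
    then show "(2::nat) ^ (Suc j - i) * 3 ^ (i - 1) = 2 * (2 ^ (j - i) * 3 ^ (i - 1))" by simp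
  qed
  also have "\<dots> = 2 * (\<Sum>i\<in>{1..<j}. 2 ^ (j - i) * 3 ^ (i - 1))" by (simp add: sum_distrib_left)
  finally have e: "(\<Sum>i\<in>{1..<Suc j}. (2::nat) ^ (Suc j - i) * 3 ^ (i - 1)) = 2 * (\<Sum>i\<in>{1..<j}. 2 ^ (j - i) * 3 ^ (i - 1)) + 2 * 3 ^ (j - 1)" .
  have "(3::nat) ^ (Suc j - 1) = 3 * 3 ^ (j - 1)" using Suc.hyps by (cases j) auto
  then show ?case using e Suc.IH by simp
qed

lemma total_eq: "(\<Sum>j\<in>{1..n}. \<Sum>i\<in>{0..<j}. (2::nat) ^ (j - i - 1))
             + (\<Sum>j\<in>{1..n}. \<Sum>i\<in>{1..<j}. (2::nat) ^ (j - i) * 3 ^ (i - 1))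
           = 3 ^ n - n - 1"
proof -
  have "(\<Sum>j\<in>{1..n}. \<Sum>i\<in>{0..<j}. (2::nat) ^ (j - i - 1))
             + (\<Sum>j\<in>{1..n}. \<Sum>i\<in>{1..<j}. (2::nat) ^ (j - i) * 3 ^ (i - 1)) + n + 1 = 3 ^ n"
  proof (induction n)
    case 0 then show ?case by simp
  next
    case (Suc n)
    have a: "(\<Sum>i\<in>{0..<Suc n}. (2::nat) ^ (Suc n - i - 1)) + 1 = 2 ^ Suc n" by (rule S1_eq)
    have b: "(\<Sum>i\<in>{1..<Suc n}. (2::nat) ^ (Suc n - i) * 3 ^ (i - 1)) + 2 ^ Suc n = 2 * 3 ^ n"
      using S2_eq[of "Suc n"] by simp
    show ?case using Suc.IH a b by (simp add: sum.cl_ivl_Suc)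
  qed
  then show ?thesis by simp
qed

lemma conv_sum:
  fixes g :: "nat \<Rightarrow> nat \<Rightarrow> nat"
  shows "(\<Sum>(i,j)\<in>{(i,j). a \<le> i \<and> i < j \<and> j \<le> n}. g i j) = (\<Sum>j\<in>{1..n}. \<Sum>i\<in>{a..<j}. g i j)"
proof -
  have e: "{(i,j). a \<le> i \<and> i < j \<and> j \<le> n} = (\<lambda>(j,i). (i,j)) ` (SIGMA j:{1..n}. {a..<j})"
    by (auto simp: image_iff)
  have inj: "inj_on (\<lambda>(j,i). (i,j)) (SIGMA j:{1..n}. {a..<j})" by (auto simp: inj_on_def)
  have "(\<Sum>(i,j)\<in>{(i,j). a \<le> i \<and> i < j \<and> j \<le> n}. g i j) = (\<Sum>(j,i)\<in>(SIGMA j:{1..n}. {a..<j}). g i j)"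
    unfolding e by (subst sum.reindex[OF inj]) (simp add: case_prod_unfold comp_def)
  also have "\<dots> = (\<Sum>j\<in>{1..n}. \<Sum>i\<in>{a..<j}. g i j)" by (rule sum.Sigma[symmetric]) auto
  finally show ?thesis .
qed

context
  fixes \<sigma> :: "nat \<Rightarrow> 'n::finite" and n :: nat
  assumes bij: "bij_betw \<sigma> {1..n} UNIV"
begin

lemma hB0: "hypB \<sigma> 0 j = root_hyp (eps \<sigma> j)"
  using bij by (auto simp: hypB_def mem_rh_eps)

lemma hBA: "1 \<le> i \<Longrightarrow> hypB \<sigma> i j = root_hyp (eps \<sigma> j - eps \<sigma> i)"
  using bij by (auto simp: hypB_def mem_rh_diff)

lemma hBN: "hypB_neg \<sigma> i j = root_hyp (eps \<sigma> j + eps \<sigma> i)"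
  using bij by (auto simp: hypB_neg_def mem_rh_sum)

definition ev :: "nat \<Rightarrow> real^'n" where "ev m = vecf \<sigma> n (\<lambda>l. if l = m then 1 else 0)"

lemma ev_hB: assumes "i < j" "j \<le> n" "1 \<le> m" "m \<le> n"
  shows "ev m \<in> hypB \<sigma> i j \<longleftrightarrow> m \<noteq> i \<and> m \<noteq> j"
  using assms bij by (auto simp: hypB_def ev_def)

lemma ev_hBN: assumes "1 \<le> i" "i < j" "j \<le> n" "1 \<le> m" "m \<le> n"
  shows "ev m \<in> hypB_neg \<sigma> i j \<longleftrightarrow> m \<noteq> i \<and> m \<noteq> j"
  using assms bij by (auto simp: hypB_neg_def ev_def)

lemma arr_eq: "arrangement (posroots_B \<sigma> n) =
   (\<lambda>(i,j). hypB \<sigma> i j) ` {(i,j). i < j \<and> j \<le> n} \<union> (\<lambda>(i,j). hypB_neg \<sigma> i j) ` {(i,j). 1 \<le> i \<and> i < j \<and> j \<le> n}"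
proof -
  have "arrangement (posroots_B \<sigma> n) =
     {root_hyp (eps \<sigma> j - eps \<sigma> i) | i j. 1 \<le> i \<and> i < j \<and> j \<le> n}
   \<union> {root_hyp (eps \<sigma> j + eps \<sigma> i) | i j. 1 \<le> i \<and> i < j \<and> j \<le> n}
   \<union> {root_hyp (eps \<sigma> i) | i. 1 \<le> i \<and> i \<le> n}"
    unfolding arrangement_def posroots_B_def by blast
  also have "\<dots> = (\<lambda>(i,j). hypB \<sigma> i j) ` {(i,j). i < j \<and> j \<le> n} \<union> (\<lambda>(i,j). hypB_neg \<sigma> i j) ` {(i,j). 1 \<le> i \<and> i < j \<and> j \<le> n}"
  proof (intro equalityI subsetI)
    fix H assume "H \<in> {root_hyp (eps \<sigma> j - eps \<sigma> i) | i j. 1 \<le> i \<and> i < j \<and> j \<le> n}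
   \<union> {root_hyp (eps \<sigma> j + eps \<sigma> i) | i j. 1 \<le> i \<and> i < j \<and> j \<le> n}
   \<union> {root_hyp (eps \<sigma> i) | i. 1 \<le> i \<and> i \<le> n}"
    then consider (a) i j where "1 \<le> i" "i < j" "j \<le> n" "H = root_hyp (eps \<sigma> j - eps \<sigma> i)"
      | (b) i j where "1 \<le> i" "i < j" "j \<le> n" "H = root_hyp (eps \<sigma> j + eps \<sigma> i)"
      | (c) i where "1 \<le> i" "i \<le> n" "H = root_hyp (eps \<sigma> i)" by blast
    then show "H \<in> (\<lambda>(i,j). hypB \<sigma> i j) ` {(i,j). i < j \<and> j \<le> n} \<union> (\<lambda>(i,j). hypB_neg \<sigma> i j) ` {(i,j). 1 \<le> i \<and> i < j \<and> j \<le> n}"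
    proof cases
      case (a i j) then have "H = hypB \<sigma> i j" by (simp add: hBA)
      then show ?thesis using a by force
    next
      case (b i j) then have "H = hypB_neg \<sigma> i j" by (simp add: hBN)
      then show ?thesis using b by force
    next
      case (c i) then have "H = hypB \<sigma> 0 i" by (simp add: hB0)
      then show ?thesis using c by force
    qed
  next
    fix H assume "H \<in> (\<lambda>(i,j). hypB \<sigma> i j) ` {(i,j). i < j \<and> j \<le> n} \<union> (\<lambda>(i,j). hypB_neg \<sigma> i j) ` {(i,j). 1 \<le> i \<and> i < j \<and> j \<le> n}"
    then consider (a) i j where "i < j" "j \<le> n" "H = hypB \<sigma> i j"
      | (b) i j where "1 \<le> i" "i < j" "j \<le> n" "H = hypB_neg \<sigma> i j" by blast
    then show "H \<in> {root_hyp (eps \<sigma> j - eps \<sigma> i) | i j. 1 \<le> i \<and> i < j \<and> j \<le> n}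
   \<union> {root_hyp (eps \<sigma> j + eps \<sigma> i) | i j. 1 \<le> i \<and> i < j \<and> j \<le> n}
   \<union> {root_hyp (eps \<sigma> i) | i. 1 \<le> i \<and> i \<le> n}"
    proof cases
      case (a i j)
      show ?thesis
      proof (cases "i = 0")
        case True then show ?thesis using a by (auto simp: hB0)
      next
        case False then show ?thesis using a by (auto simp: hBA)
      qed
    next
      case (b i j) then show ?thesis by (auto simp: hBN)
    qed
  qed
  finally show ?thesis .
qed

lemma idx_eq:
  assumes "\<forall>m. 1 \<le> m \<and> m \<le> n \<longrightarrow> ((m \<noteq> i \<and> m \<noteq> j) \<longleftrightarrow> (m \<noteq> i' \<and> m \<noteq> j'))"
    and "i < j" "j \<le> n" "i' < j'" "j' \<le> n"
  shows "(i = 0 \<longleftrightarrow> i' = 0) \<and> j = j' \<and> i = i'"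
proof -
  have Fj: "j = i' \<or> j = j'" using assms(1)[rule_format, of j] assms(2-5) by auto
  have Fj': "j' = i \<or> j' = j" using assms(1)[rule_format, of j'] assms(2-5) by auto
  have Fi: "1 \<le> i \<Longrightarrow> i = i' \<or> i = j'" using assms(1)[rule_format, of i] assms(2-5) by auto
  have Fi': "1 \<le> i' \<Longrightarrow> i' = i \<or> i' = j" using assms(1)[rule_format, of i'] assms(2-5) by auto
  show ?thesis using Fj Fj' Fi Fi' assms(2-5) by linarith
qed

lemma inj0: "inj_on (\<lambda>(i,j). hypB \<sigma> i j) {(i,j). i < j \<and> j \<le> n}"
proof (rule inj_onI, clarify)
  fix i j i' j' assume a: "i < j" "j \<le> n" "i' < j'" "j' \<le> n" and e: "hypB \<sigma> i j = hypB \<sigma> i' j'"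
  have "\<forall>m. 1 \<le> m \<and> m \<le> n \<longrightarrow> ((m \<noteq> i \<and> m \<noteq> j) \<longleftrightarrow> (m \<noteq> i' \<and> m \<noteq> j'))"
    using ev_hB[of i j] ev_hB[of i' j'] e a by auto
  then show "i = i' \<and> j = j'" using idx_eq a by blast
qed

lemma inj1: "inj_on (\<lambda>(i,j). hypB_neg \<sigma> i j) {(i,j). 1 \<le> i \<and> i < j \<and> j \<le> n}"
proof (rule inj_onI, clarify)
  fix i j i' j' assume a: "1 \<le> i" "i < j" "j \<le> n" "1 \<le> i'" "i' < j'" "j' \<le> n" and e: "hypB_neg \<sigma> i j = hypB_neg \<sigma> i' j'"
  have "\<forall>m. 1 \<le> m \<and> m \<le> n \<longrightarrow> ((m \<noteq> i \<and> m \<noteq> j) \<longleftrightarrow> (m \<noteq> i' \<and> m \<noteq> j'))"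
    using ev_hBN[of i j] ev_hBN[of i' j'] e a by auto
  then show "i = i' \<and> j = j'" using idx_eq a by blast
qed

lemma disj01: "(\<lambda>(i,j). hypB \<sigma> i j) ` {(i,j). i < j \<and> j \<le> n} \<inter> (\<lambda>(i,j). hypB_neg \<sigma> i j) ` {(i,j). 1 \<le> i \<and> i < j \<and> j \<le> n} = {}"
proof (rule ccontr)
  assume "\<not> ?thesis"
  then obtain i j i' j' where a: "i < j" "j \<le> n" "1 \<le> i'" "i' < j'" "j' \<le> n" and e: "hypB \<sigma> i j = hypB_neg \<sigma> i' j'"
    by auto
  have "\<forall>m. 1 \<le> m \<and> m \<le> n \<longrightarrow> ((m \<noteq> i \<and> m \<noteq> j) \<longleftrightarrow> (m \<noteq> i' \<and> m \<noteq> j'))"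
    using ev_hB[of i j] ev_hBN[of i' j'] e a by auto
  then have ii: "i = i'" "j = j'" using idx_eq a by blast+
  define w where "w = vecf \<sigma> n (\<lambda>l. if l = i \<or> l = j then 1 else 0)"
  have "w \<in> hypB \<sigma> i j" using a ii bij by (auto simp: w_def hypB_def)
  moreover have "w \<notin> hypB_neg \<sigma> i' j'" using a ii bij by (auto simp: w_def hypB_neg_def)
  ultimately show False using e by simp
qed

end

theorem mainTheorem7:
  fixes \<sigma> :: "nat \<Rightarrow> 'n::finite" and n :: nat
  assumes "n = CARD('n)"
    and "bij_betw \<sigma> {1..n} UNIV"
  shows "(\<forall>i j. i < j \<and> j \<le> n \<longrightarrow>
            card (shards_of (arrangement (posroots_B \<sigma> n)) (base_region (posroots_B \<sigma> n))
                   (hypB \<sigma> i j)) = 2 ^ (j - i - 1))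
       \<and> (\<forall>i j. 1 \<le> i \<and> i < j \<and> j \<le> n \<longrightarrow>
            card (shards_of (arrangement (posroots_B \<sigma> n)) (base_region (posroots_B \<sigma> n))
                   (hypB_neg \<sigma> i j)) = 2 ^ (j - i) * 3 ^ (i - 1))
       \<and> card (all_shards (arrangement (posroots_B \<sigma> n)) (base_region (posroots_B \<sigma> n)))
           = (\<Sum>j\<in>{1..n}. \<Sum>i\<in>{0..<j}. (2::nat) ^ (j - i - 1))
             + (\<Sum>j\<in>{1..n}. \<Sum>i\<in>{1..<j}. (2::nat) ^ (j - i) * 3 ^ (i - 1))
       \<and> (\<Sum>j\<in>{1..n}. \<Sum>i\<in>{0..<j}. (2::nat) ^ (j - i - 1))
             + (\<Sum>j\<in>{1..n}. \<Sum>i\<in>{1..<j}. (2::nat) ^ (j - i) * 3 ^ (i - 1))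
           = 3 ^ n - n - 1"
proof -
  note bij = assms(2)
  let ?P = "posroots_B \<sigma> n"
  let ?A = "arrangement ?P" and ?B = "base_region ?P"
  let ?f = "\<lambda>H. card (shards_of ?A ?B H)"
  let ?I0 = "{(i,j). i < j \<and> j \<le> n}" and ?I1 = "{(i,j). 1 \<le> i \<and> i < j \<and> j \<le> n}"
  let ?h0 = "\<lambda>(i,j). hypB \<sigma> i j" and ?h1 = "\<lambda>(i,j). hypB_neg \<sigma> i j"
  have P1: "\<forall>i j. i < j \<and> j \<le> n \<longrightarrow> ?f (hypB \<sigma> i j) = 2 ^ (j - i - 1)"
  proof (intro allI impI)
    fix i j :: nat assume ij: "i < j \<and> j \<le> n"
    show "?f (hypB \<sigma> i j) = 2 ^ (j - i - 1)"
    proof (cases "i = 0")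
      case True then show ?thesis using shards0[OF bij, of j] ij hB0[OF bij, of j] by simp
    next
      case False then show ?thesis using shardsA[OF bij, of i j] ij hBA[OF bij, of i j] by simp
    qed
  qed
  have P2: "\<forall>i j. 1 \<le> i \<and> i < j \<and> j \<le> n \<longrightarrow> ?f (hypB_neg \<sigma> i j) = 2 ^ (j - i) * 3 ^ (i - 1)"
    using shardsN[OF bij] hBN[OF bij] by simp
  have finA: "finite ?A" using finite_PB[OF bij] by (simp add: arrangement_def)
  have pos: "?f H > 0" if "H \<in> ?A" for H
  proof -
    from that consider (a) i j where "i < j" "j \<le> n" "H = hypB \<sigma> i j"
      | (b) i j where "1 \<le> i" "i < j" "j \<le> n" "H = hypB_neg \<sigma> i j"
      unfolding arr_eq[OF bij] by blast
    then show ?thesis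
    proof cases
      case (a i j) then show ?thesis using P1 by simp
    next
      case (b i j) then show ?thesis using P2 by simp
    qed
  qed
  have P3: "card (all_shards ?A ?B) = sum ?f ?A"
    unfolding all_shards_def
  proof (rule card_UN_disjoint[OF finA])
    show "\<forall>H\<in>?A. finite (shards_of ?A ?B H)" using pos card_gt_0_iff by blast
    show "\<forall>H\<in>?A. \<forall>H'\<in>?A. H \<noteq> H' \<longrightarrow> shards_of ?A ?B H \<inter> shards_of ?A ?B H' = {}"
    proof (intro ballI impI)
      fix H H' assume "H \<in> ?A" "H' \<in> ?A" "H \<noteq> H'"
      then obtain \<beta> \<beta>' where "\<beta> \<in> ?P" "\<beta>' \<in> ?P" "H = root_hyp \<beta>" "H' = root_hyp \<beta>'"
        by (auto simp: arrangement_def)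
      then show "shards_of ?A ?B H \<inter> shards_of ?A ?B H' = {}"
        using shards_disjoint[OF finite_PB[OF bij] nz_PB[OF bij]] \<open>H \<noteq> H'\<close> by blast
    qed
  qed
  have "sum ?f ?A = sum ?f (?h0 ` ?I0) + sum ?f (?h1 ` ?I1)"
    unfolding arr_eq[OF bij]
  proof (rule sum.union_disjoint)
    have "finite ?I0"
      by (rule finite_subset[of _ "{0..n} \<times> {0..n}"]) auto
    then show "finite (?h0 ` ?I0)" by simp
    have "finite ?I1"
      by (rule finite_subset[of _ "{0..n} \<times> {0..n}"]) auto
    then show "finite (?h1 ` ?I1)" by simp
    show "?h0 ` ?I0 \<inter> ?h1 ` ?I1 = {}" by (rule disj01[OF bij])
  qed
  also have "sum ?f (?h0 ` ?I0) = (\<Sum>(i,j)\<in>?I0. (2::nat) ^ (j - i - 1))"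
  proof -
    have "sum ?f (?h0 ` ?I0) = sum (?f \<circ> ?h0) ?I0" by (rule sum.reindex[OF inj0[OF bij]])
    also have "\<dots> = (\<Sum>(i,j)\<in>?I0. (2::nat) ^ (j - i - 1))"
      by (rule sum.cong[OF refl]) (use P1 in auto)
    finally show ?thesis .
  qed
  also have "\<dots> = (\<Sum>j\<in>{1..n}. \<Sum>i\<in>{0..<j}. (2::nat) ^ (j - i - 1))"
    using conv_sum[where a=0 and n=n and g="\<lambda>i j. (2::nat) ^ (j - i - 1)"] by simp
  also have "sum ?f (?h1 ` ?I1) = (\<Sum>(i,j)\<in>?I1. (2::nat) ^ (j - i) * 3 ^ (i - 1))"
  proof -
    have "sum ?f (?h1 ` ?I1) = sum (?f \<circ> ?h1) ?I1" by (rule sum.reindex[OF inj1[OF bij]])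
    also have "\<dots> = (\<Sum>(i,j)\<in>?I1. (2::nat) ^ (j - i) * 3 ^ (i - 1))"
      by (rule sum.cong[OF refl]) (use P2 in auto)
    finally show ?thesis .
  qed
  also have "\<dots> = (\<Sum>j\<in>{1..n}. \<Sum>i\<in>{1..<j}. (2::nat) ^ (j - i) * 3 ^ (i - 1))"
    using conv_sum[where a=1 and n=n and g="\<lambda>i j. (2::nat) ^ (j - i) * 3 ^ (i - 1)"] by simp
  finally have P3': "card (all_shards ?A ?B) = (\<Sum>j\<in>{1..n}. \<Sum>i\<in>{0..<j}. (2::nat) ^ (j - i - 1))
             + (\<Sum>j\<in>{1..n}. \<Sum>i\<in>{1..<j}. (2::nat) ^ (j - i) * 3 ^ (i - 1))" using P3 by simp
  show ?thesis using P1 P2 P3' total_eq by blast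
qed


end
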